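(* Let $\mathcal{T}=(V,A,E,f,q,v_0)$ be a decorated rooted tree such that $f(\alpha)\in\{0,1\}$ for all $\alpha\in A$. Let $n=\delta_{v_0}$, assume $n\ge1$, let $\mathcal{T}_1,\dots,\mathcal{T}_n$ be the decorated trees attached to $\mathcal{T}$ as described in the context, and let $d=\deg(\mathcal{T})$. Then $$g(\mathcal{T})=\frac{(d-1)(d-2)}{2}-\sum_{i=1}^n\delta(\mathcal{T}_i).$$
   Context: A graph is a pair $(X_0,X_1)$ of finite sets such that each element of $X_1$ (an edge) is a $2$-element subset of $X_0$; elements of $X_0$ are cells. The valency $\delta_x$ of a cell is the number of edges containing it. A path is a tuple $(x_0,\dots,x_n)$ ($n\ge0$) of cells with $\{x_i,x_{i+1}\}$ an edge for each $i<n$, these edges pairwise distinct; a cell/edge is in the path if it is some $x_i$ / some $\{x_i,x_{i+1}\}$. The graph is a tree if any two cells $x,y$ are joined by a unique path $\gamma_{x,y}$. A decorated tree is $(V,A,E,f,q)$ with $V$ (vertices), $A$ (arrows) finite disjoint sets, $(V\cup A,E)$ a tree, every arrow of valency $1$, $f:A\to\mathbb{Z}$, $q(e,x)\in\mathbb{Z}$ for each $e\in E$, $x\in e$, with $q(e,\alpha)=1$ for $\alpha\in A$, and for each $v\in V$ and distinct edges $e,e'\ni v$, $\gcd(q(e,v),q(e',v))=1$. $A_0=\{\alpha\in A:f(\alpha)=0\}$. For $x\in V\cup A$, $e\ni x$: $Q(e,x)=\prod q(e',x)$ over edges $e'\ne e$ containing $x$ (empty product $=1$); for an edge $e=\{x,y\}$,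 $\det(e)=q(e,x)q(e,y)-Q(e,x)Q(e,y)$. An edge $\varepsilon$ is incident to a path $\gamma$ if it is not in $\gamma$ but contains a cell $u$ of $\gamma$; $q(\varepsilon,\gamma):=q(\varepsilon,u)$. For $v\ne\alpha$, $v\in V\cup A$, $\alpha\in A$: $x_{v,\alpha}=f(\alpha)\prod_\varepsilon q(\varepsilon,\gamma_{v,\alpha})$ over edges incident to $\gamma_{v,\alpha}$; $\hat x_{v,\alpha}$ the same with product restricted to $\varepsilon\not\ni v$. For $v\in V\cup A_0$, $N_v=\sum_{\alpha\in A\setminus A_0}x_{v,\alpha}$; $M(\mathcal{T})=-\sum_{v\in V\cup A_0}N_v(\delta_v-2)$. For $u\in V\cup A$, $e\ni u$: $p(u,e)=\sum\hat x_{u,\alpha}$ over $\alpha\in A\setminus A_0$ with $e$ in $\gamma_{u,\alpha}$. For $\alpha\in A\setminus A_0$ with unique edge $e_\alpha$: $F(\alpha)=\gcd(f(\alpha),p(\alpha,e_\alpha))\ge0$; $F(\mathcal{T})=\sum_{\alpha\in A\setminus A_0}F(\alpha)$. $g(\mathcal{T})=\tfrac12(2-M(\mathcal{T})-F(\mathcal{T}))$, $\delta(\mathcal{T})=\tfrac12(F(\mathcal{T})-M(\mathcal{T}))$. A root of $(V,A,E,f,q)$ is a vertex $v_0$ with $q(e,v_0)=1$ for every edge $e\ni v_0$ such that for every $v\in V\setminus\{v_0\}$, all edges $e\ni v$ not in $\gamma_{v_0,v}$ satisfy $q(e,v)\ge1$ and at most one of them satisfies $q(e,v)\ne1$. A decorated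 rooted tree is $(V,A,E,f,q,v_0)$ with $v_0$ a root. $\deg(\mathcal{T})$ denotes $N_{v_0}$. Central elements: for a path $(w_1,\dots,w_m)$, $m\ge2$, say it satisfies $(+)$ if every edge $e\ni w_m$ other than $\{w_{m-1},w_m\}$ has $q(e,w_m)\ge1$ and at most one such edge has $q(e,w_m)>1$. An element $\eta\in V\cup A$ of a decorated tree is central if $\gamma_{\eta,v}$ satisfies $(+)$ for every $v\in V\setminus\{\eta\}$. For a decorated tree $\mathcal{S}=(V,A,E,f,q)$ and central $\eta$, $\mathcal{S}^{(\eta)}$ is the unique decorated tree $(V,A,E,f,q^* )$ (such a unique tree exists) with: $q^*(e,\eta)=q(e,\eta)$ for all $e\ni\eta$; $q^*(e,v)=q(e,v)$ for all $v\in V\setminus\{\eta\}$ and edges $e\ni v$ not in $\gamma_{\eta,v}$; $q^*(e,v)=Q(e,v)-q(e,v)$ for every edge $e=\{\eta,v\}$ with $v\in V$; and $\det^*(e)=-\det(e)$ for every edge $e=\{u,v\}$ with $u,v\in V\setminus\{\eta\}$ ($\det^*$ computed with $q^*$). The trees $\mathcal{T}_i$: let $v_1,\dots,v_n$ be the distinct cells adjacent to $v_0$, $e_i=\{v_0,v_i\}$. Delete $e_1,\dots,e_n$ from $\mathcal{T}$; let $\mathcal{C}_i$ be the connected component containing $v_i$. Let $\mathcal{T}'_i$ be obtained from $\mathcal{C}_i$ by adding an arrow $\alpha_i$ with $f(\alpha_i)=0$ and an edge $\{\alpha_i,v_i\}$ decorated $q(e_i,v_i)$ near $v_i$ and $1$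 near $\alpha_i$. Then $\alpha_i$ is central in $\mathcal{T}'_i$ and $\mathcal{T}_i:=(\mathcal{T}'_i)^{(\alpha_i)}$. *)

theory Defs
  imports Complex_Main
begin

record 'a dtree =
  Vs :: "'a set"
  As :: "'a set"
  Es :: "'a set set"
  fd :: "'a \<Rightarrow> int"
  qd :: "'a set \<Rightarrow> 'a \<Rightarrow> int"

definition is_graph :: "'a set \<Rightarrow> 'a set set \<Rightarrow> bool" where
  "is_graph X0 X1 \<longleftrightarrow> finite X0 \<and> finite X1 \<and> (\<forall>e\<in>X1. e \<subseteq> X0 \<and> card e = 2)"

definition path_edges :: "'a list \<Rightarrow> 'a set list" where
  "path_edges xs = map (\<lambda>i. {xs ! i, xs ! Suc i}) [0..<length xs - 1]"

definition is_path :: "'a set \<Rightarrow> 'a set set \<Rightarrow> 'a list \<Rightarrow> bool" where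
  "is_path X0 X1 xs \<longleftrightarrow> xs \<noteq> [] \<and> set xs \<subseteq> X0 \<and>
     (\<forall>i < length xs - 1. {xs ! i, xs ! Suc i} \<in> X1) \<and> distinct (path_edges xs)"

definition is_tree :: "'a set \<Rightarrow> 'a set set \<Rightarrow> bool" where
  "is_tree X0 X1 \<longleftrightarrow> is_graph X0 X1 \<and>
     (\<forall>x\<in>X0. \<forall>y\<in>X0. \<exists>!p. is_path X0 X1 p \<and> hd p = x \<and> last p = y)"

definition cells :: "('a, 'b) dtree_scheme \<Rightarrow> 'a set" where
  "cells T = Vs T \<union> As T"

definition valency :: "('a, 'b) dtree_scheme \<Rightarrow> 'a \<Rightarrow> nat" where
  "valency T x = card {e \<in> Es T. x \<in> e}"

definition gam :: "('a, 'b) dtree_scheme \<Rightarrow> 'a \<Rightarrow> 'a \<Rightarrow> 'a list" where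
  "gam T x y = (THE p. is_path (cells T) (Es T) p \<and> hd p = x \<and> last p = y)"

definition decorated_tree :: "('a, 'b) dtree_scheme \<Rightarrow> bool" where
  "decorated_tree T \<longleftrightarrow> finite (Vs T) \<and> finite (As T) \<and> Vs T \<inter> As T = {} \<and>
     is_tree (cells T) (Es T) \<and>
     (\<forall>\<alpha>\<in>As T. valency T \<alpha> = 1) \<and>
     (\<forall>e\<in>Es T. \<forall>\<alpha>\<in>As T. \<alpha> \<in> e \<longrightarrow> qd T e \<alpha> = 1) \<and>
     (\<forall>v\<in>Vs T. \<forall>e\<in>Es T. \<forall>e'\<in>Es T. v \<in> e \<and> v \<in> e' \<and> e \<noteq> e' \<longrightarrow>
         gcd (qd T e v) (qd T e' v) = 1)"

definition A0 :: "('a, 'b) dtree_scheme \<Rightarrow> 'a set" where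
  "A0 T = {\<alpha> \<in> As T. fd T \<alpha> = 0}"

definition Qf :: "('a, 'b) dtree_scheme \<Rightarrow> 'a set \<Rightarrow> 'a \<Rightarrow> int" where
  "Qf T e x = (\<Prod>e'\<in>{e' \<in> Es T. x \<in> e' \<and> e' \<noteq> e}. qd T e' x)"

definition detf :: "('a, 'b) dtree_scheme \<Rightarrow> 'a \<Rightarrow> 'a \<Rightarrow> int" where
  "detf T x y = qd T {x, y} x * qd T {x, y} y - Qf T {x, y} x * Qf T {x, y} y"

definition incident :: "('a, 'b) dtree_scheme \<Rightarrow> 'a list \<Rightarrow> 'a set set" where
  "incident T p = {\<epsilon> \<in> Es T. \<epsilon> \<notin> set (path_edges p) \<and> (\<exists>u\<in>set p. u \<in> \<epsilon>)}"

definition qpath :: "('a, 'b) dtree_scheme \<Rightarrow> 'a set \<Rightarrow> 'a list \<Rightarrow> int" where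
  "qpath T \<epsilon> p = qd T \<epsilon> (THE u. u \<in> set p \<and> u \<in> \<epsilon>)"

definition xval :: "('a, 'b) dtree_scheme \<Rightarrow> 'a \<Rightarrow> 'a \<Rightarrow> int" where
  "xval T v \<alpha> = fd T \<alpha> * (\<Prod>\<epsilon>\<in>incident T (gam T v \<alpha>). qpath T \<epsilon> (gam T v \<alpha>))"

definition xhat :: "('a, 'b) dtree_scheme \<Rightarrow> 'a \<Rightarrow> 'a \<Rightarrow> int" where
  "xhat T v \<alpha> = fd T \<alpha> *
     (\<Prod>\<epsilon>\<in>{\<epsilon> \<in> incident T (gam T v \<alpha>). v \<notin> \<epsilon>}. qpath T \<epsilon> (gam T v \<alpha>))"

definition Nf :: "('a, 'b) dtree_scheme \<Rightarrow> 'a \<Rightarrow> int" where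
  "Nf T v = (\<Sum>\<alpha>\<in>As T - A0 T. xval T v \<alpha>)"

definition Mf :: "('a, 'b) dtree_scheme \<Rightarrow> int" where
  "Mf T = - (\<Sum>v\<in>Vs T \<union> A0 T. Nf T v * (int (valency T v) - 2))"

definition pf :: "('a, 'b) dtree_scheme \<Rightarrow> 'a \<Rightarrow> 'a set \<Rightarrow> int" where
  "pf T u e = (\<Sum>\<alpha>\<in>{\<alpha> \<in> As T - A0 T. e \<in> set (path_edges (gam T u \<alpha>))}. xhat T u \<alpha>)"

definition e_arrow :: "('a, 'b) dtree_scheme \<Rightarrow> 'a \<Rightarrow> 'a set" where
  "e_arrow T \<alpha> = (THE e. e \<in> Es T \<and> \<alpha> \<in> e)"

definition F_arrow :: "('a, 'b) dtree_scheme \<Rightarrow> 'a \<Rightarrow> int" where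
  "F_arrow T \<alpha> = gcd (fd T \<alpha>) (pf T \<alpha> (e_arrow T \<alpha>))"

definition Ff :: "('a, 'b) dtree_scheme \<Rightarrow> int" where
  "Ff T = (\<Sum>\<alpha>\<in>As T - A0 T. F_arrow T \<alpha>)"

definition genus :: "('a, 'b) dtree_scheme \<Rightarrow> real" where
  "genus T = (2 - real_of_int (Mf T) - real_of_int (Ff T)) / 2"

definition delta :: "('a, 'b) dtree_scheme \<Rightarrow> real" where
  "delta T = (real_of_int (Ff T) - real_of_int (Mf T)) / 2"

definition is_root :: "('a, 'b) dtree_scheme \<Rightarrow> 'a \<Rightarrow> bool" where
  "is_root T v0 \<longleftrightarrow> v0 \<in> Vs T \<and> (\<forall>e\<in>Es T. v0 \<in> e \<longrightarrow> qd T e v0 = 1) \<and>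
     (\<forall>v\<in>Vs T - {v0}.
        (\<forall>e\<in>Es T. v \<in> e \<and> e \<notin> set (path_edges (gam T v0 v)) \<longrightarrow> qd T e v \<ge> 1) \<and>
        card {e \<in> Es T. v \<in> e \<and> e \<notin> set (path_edges (gam T v0 v)) \<and> qd T e v \<noteq> 1} \<le> 1)"

definition deg :: "('a, 'b) dtree_scheme \<Rightarrow> 'a \<Rightarrow> int" where
  "deg T v0 = Nf T v0"

text \<open>Characterisation of q^*; q^* is normalised to 0 off incident pairs (e,x), x \<in> e \<in> E,
  which are the only values the theory uses.\<close>
definition star_cond :: "('a, 'b) dtree_scheme \<Rightarrow> 'a \<Rightarrow> ('a set \<Rightarrow> 'a \<Rightarrow> int) \<Rightarrow> bool" where
  "star_cond S \<eta> q' \<longleftrightarrow>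
     decorated_tree (S\<lparr>qd := q'\<rparr>) \<and>
     (\<forall>e x. \<not> (e \<in> Es S \<and> x \<in> e) \<longrightarrow> q' e x = 0) \<and>
     (\<forall>e\<in>Es S. \<eta> \<in> e \<longrightarrow> q' e \<eta> = qd S e \<eta>) \<and>
     (\<forall>v\<in>Vs S - {\<eta>}. \<forall>e\<in>Es S. v \<in> e \<and> e \<notin> set (path_edges (gam S \<eta> v)) \<longrightarrow>
         q' e v = qd S e v) \<and>
     (\<forall>v\<in>Vs S. {\<eta>, v} \<in> Es S \<longrightarrow> q' {\<eta>, v} v = Qf S {\<eta>, v} v - qd S {\<eta>, v} v) \<and>
     (\<forall>u\<in>Vs S - {\<eta>}. \<forall>v\<in>Vs S - {\<eta>}. {u, v} \<in> Es S \<longrightarrow>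
         detf (S\<lparr>qd := q'\<rparr>) u v = - detf S u v)"

definition star :: "('a, 'b) dtree_scheme \<Rightarrow> 'a \<Rightarrow> ('a, 'b) dtree_scheme" where
  "star S \<eta> = S\<lparr>qd := (THE q'. star_cond S \<eta> q')\<rparr>"

definition comp_cells :: "'a set set \<Rightarrow> 'a \<Rightarrow> 'a set" where
  "comp_cells X1 w = {x. (w, x) \<in> {(a, b). {a, b} \<in> X1}\<^sup>*}"

definition nbrs :: "('a, 'b) dtree_scheme \<Rightarrow> 'a \<Rightarrow> 'a set" where
  "nbrs T v0 = {w. {v0, w} \<in> Es T}"

text \<open>T'_i for the neighbour w of v0: the component C of w after deleting all edges at v0,
  with a new arrow (represented by None; old cells x become Some x) attached to w.\<close>
definition Tprime :: "('a, 'b) dtree_scheme \<Rightarrow> 'a \<Rightarrow> 'a \<Rightarrow> 'a option dtree" where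
  "Tprime T v0 w =
    (let E' = {e \<in> Es T. v0 \<notin> e};
         C = comp_cells E' w
     in \<lparr> Vs = Some ` (Vs T \<inter> C),
          As = insert None (Some ` (As T \<inter> C)),
          Es = insert {None, Some w} ((\<lambda>e. Some ` e) ` {e \<in> E'. e \<subseteq> C}),
          fd = (\<lambda>x. case x of None \<Rightarrow> 0 | Some y \<Rightarrow> fd T y),
          qd = (\<lambda>e x. if e = {None, Some w}
                      then (if x = None then 1 else qd T {v0, w} w)
                      else (case x of None \<Rightarrow> 0 | Some y \<Rightarrow> qd T (Some -` e) y)) \<rparr>)"

definition Ti :: "('a, 'b) dtree_scheme \<Rightarrow> 'a \<Rightarrow> 'a \<Rightarrow> 'a option dtree" where
  "Ti T v0 w = star (Tprime T v0 w) None"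

end

theory Submission
  imports Defs
begin

lemma path_edges_Nil[simp]: "path_edges [] = []"
  by (simp add: path_edges_def)
lemma path_edges_single[simp]: "path_edges [x] = []"
  by (simp add: path_edges_def)
lemma path_edges_Cons2[simp]: "path_edges (x # y # ys) = {x,y} # path_edges (y # ys)"
  by (simp add: path_edges_def upt_conv_Cons map_Suc_upt[symmetric] del: upt_Suc)

lemma is_path_alt: "is_path X0 X1 p \<longleftrightarrow> p \<noteq> [] \<and> set p \<subseteq> X0 \<and> set (path_edges p) \<subseteq> X1 \<and> distinct (path_edges p)"
  unfolding is_path_def path_edges_def by auto

lemma path_edges_snoc: "xs \<noteq> [] \<Longrightarrow> path_edges (xs @ [z]) = path_edges xs @ [{last xs, z}]"
  by (induct xs rule: induct_list012) auto

lemma path_edges_append: "xs \<noteq> [] \<Longrightarrow> ys \<noteq> [] \<Longrightarrow>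
   path_edges (xs @ ys) = path_edges xs @ {last xs, hd ys} # path_edges ys"
proof (induct xs rule: induct_list012)
  case (2 x) then show ?case by (cases ys) auto
next
  case (3 x y zs) then show ?case by auto
qed simp

lemma path_edges_rev: "path_edges (rev xs) = rev (path_edges xs)"
proof (induct xs rule: induct_list012)
  case (3 x y zs)
  have "path_edges (rev (x # y # zs)) = path_edges (rev (y # zs) @ [x])" by simp
  also have "\<dots> = path_edges (rev (y # zs)) @ [{last (rev (y#zs)), x}]"
    by (rule path_edges_snoc) simp
  also have "\<dots> = rev (path_edges (y # zs)) @ [{x, y}]" using 3 by (simp add: insert_commute)
  finally show ?case by simp
qed auto

lemma length_path_edges: "length (path_edges xs) = length xs - 1"
  by (simp add: path_edges_def)

lemma path_edges_subset: "e \<in> set (path_edges xs) \<Longrightarrow> e \<subseteq> set xs"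
  by (induct xs rule: induct_list012) auto

lemma path_edges_tl_append: "xs \<noteq> [] \<Longrightarrow> ys \<noteq> [] \<Longrightarrow> last xs = hd ys \<Longrightarrow>
   path_edges (xs @ tl ys) = path_edges xs @ path_edges ys"
proof (cases ys)
  case (Cons y ys')
  assume a: "xs \<noteq> []" "last xs = hd ys"
  show ?thesis
  proof (cases ys')
    case Nil then show ?thesis using Cons by simp
  next
    case (Cons z zs)
    then show ?thesis using \<open>ys = y # ys'\<close> a by (simp add: path_edges_append)
  qed
qed simp

lemma is_path_rev[simp]: "is_path X0 X1 (rev p) \<longleftrightarrow> is_path X0 X1 p"
  by (simp add: is_path_alt path_edges_rev)

lemma is_path_appendD1: "is_path X0 X1 (xs @ ys) \<Longrightarrow> xs \<noteq> [] \<Longrightarrow> is_path X0 X1 xs"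
  by (cases "ys = []") (auto simp: is_path_alt path_edges_append)

lemma is_path_appendD2: "is_path X0 X1 (xs @ ys) \<Longrightarrow> ys \<noteq> [] \<Longrightarrow> is_path X0 X1 ys"
  by (cases "xs = []") (auto simp: is_path_alt path_edges_append)

lemma is_path_mid: "is_path X0 X1 (xs @ ys @ zs) \<Longrightarrow> ys \<noteq> [] \<Longrightarrow> is_path X0 X1 ys"
  by (metis append_is_Nil_conv is_path_appendD1 is_path_appendD2)

lemma is_path_snoc: "is_path X0 X1 p \<Longrightarrow> {last p, z} \<in> X1 \<Longrightarrow> z \<notin> set p \<Longrightarrow> z \<in> X0 \<Longrightarrow>
   is_path X0 X1 (p @ [z])"
  using path_edges_subset[of "{last p, z}" p]
  by (auto simp: is_path_alt path_edges_snoc)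

lemma is_path_single[simp]: "is_path X0 X1 [x] \<longleftrightarrow> x \<in> X0"
  by (simp add: is_path_alt)

lemma is_path_pair: "{a,b} \<in> X1 \<Longrightarrow> a \<in> X0 \<Longrightarrow> b \<in> X0 \<Longrightarrow> is_path X0 X1 [a,b]"
  by (simp add: is_path_alt)

lemma is_path_mono: "is_path X0 X1 p \<Longrightarrow> X0 \<subseteq> Y0 \<Longrightarrow> X1 \<subseteq> Y1 \<Longrightarrow> is_path Y0 Y1 p"
  by (auto simp: is_path_alt)


locale tree =
  fixes X0 :: "'a set" and X1 :: "'a set set"
  assumes tr: "is_tree X0 X1"
begin

definition gp where "gp x y = (THE p. is_path X0 X1 p \<and> hd p = x \<and> last p = y)"

lemma finX0: "finite X0" and finX1: "finite X1"
  using tr by (auto simp: is_tree_def is_graph_def)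

lemma edge_sub: "e \<in> X1 \<Longrightarrow> e \<subseteq> X0" and edge_card: "e \<in> X1 \<Longrightarrow> card e = 2"
  using tr by (auto simp: is_tree_def is_graph_def)

lemma edge_neq: "{a,b} \<in> X1 \<Longrightarrow> a \<noteq> b"
  using edge_card[of "{a,b}"] by auto

lemma edge_in: "{a,b} \<in> X1 \<Longrightarrow> a \<in> X0 \<and> b \<in> X0"
  using edge_sub by auto

lemma edge_form: "e \<in> X1 \<Longrightarrow> x \<in> e \<Longrightarrow> \<exists>y. e = {x,y} \<and> x \<noteq> y"
  using edge_card[of e] by (metis card_2_iff doubleton_eq_iff insertE singletonD)

lemma ex1: "x \<in> X0 \<Longrightarrow> y \<in> X0 \<Longrightarrow> \<exists>!p. is_path X0 X1 p \<and> hd p = x \<and> last p = y"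
  using tr by (auto simp: is_tree_def)

lemma gp: "x \<in> X0 \<Longrightarrow> y \<in> X0 \<Longrightarrow> is_path X0 X1 (gp x y) \<and> hd (gp x y) = x \<and> last (gp x y) = y"
  unfolding gp_def by (rule theI', rule ex1)

lemma gp_path: "x \<in> X0 \<Longrightarrow> y \<in> X0 \<Longrightarrow> is_path X0 X1 (gp x y)"
  and gp_hd: "x \<in> X0 \<Longrightarrow> y \<in> X0 \<Longrightarrow> hd (gp x y) = x"
  and gp_last: "x \<in> X0 \<Longrightarrow> y \<in> X0 \<Longrightarrow> last (gp x y) = y"
  using gp by auto

lemma gp_ne: "x \<in> X0 \<Longrightarrow> y \<in> X0 \<Longrightarrow> gp x y \<noteq> []"
  using gp_path by (auto simp: is_path_alt)

lemma gp_set: "x \<in> X0 \<Longrightarrow> y \<in> X0 \<Longrightarrow> set (gp x y) \<subseteq> X0"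
  using gp_path by (auto simp: is_path_alt)

lemma gp_edges: "x \<in> X0 \<Longrightarrow> y \<in> X0 \<Longrightarrow> set (path_edges (gp x y)) \<subseteq> X1"
  using gp_path by (auto simp: is_path_alt)

lemma path_hd_in: "is_path X0 X1 p \<Longrightarrow> hd p \<in> X0" and path_last_in: "is_path X0 X1 p \<Longrightarrow> last p \<in> X0"
  by (auto simp: is_path_alt)

lemma gp_eq: "is_path X0 X1 p \<Longrightarrow> gp (hd p) (last p) = p"
proof -
  assume p: "is_path X0 X1 p"
  have "hd p \<in> X0" "last p \<in> X0" using p by (auto simp: is_path_alt)
  then show ?thesis using ex1[of "hd p" "last p"] p gp[of "hd p" "last p"] by blast
qed

lemma gp_eqI: "is_path X0 X1 p \<Longrightarrow> hd p = x \<Longrightarrow> last p = y \<Longrightarrow> gp x y = p"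
  using gp_eq by blast

lemma path_uniq: "is_path X0 X1 p \<Longrightarrow> is_path X0 X1 q \<Longrightarrow> hd p = hd q \<Longrightarrow> last p = last q \<Longrightarrow> p = q"
  using gp_eq by metis

lemma path_distinct: "is_path X0 X1 p \<Longrightarrow> distinct p"
proof (rule ccontr)
  assume p: "is_path X0 X1 p" and nd: "\<not> distinct p"
  obtain xs ys zs y where pe: "p = xs @ [y] @ ys @ [y] @ zs" using not_distinct_decomp[OF nd] by blast
  have "is_path X0 X1 ([y] @ ys @ [y])" using is_path_mid[of X0 X1 xs "[y] @ ys @ [y]" zs] p pe by simp
  moreover have "is_path X0 X1 [y]" using calculation by (auto simp: is_path_alt)
  ultimately have "[y] @ ys @ [y] = [y]" using path_uniq[of "[y] @ ys @ [y]" "[y]"] by simp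
  then show False by simp
qed

lemma no_chord_aux: "is_path X0 X1 (xs @ a # ys @ b # zs) \<Longrightarrow> {a,b} \<in> X1 \<Longrightarrow> ys = []"
proof -
  assume p: "is_path X0 X1 (xs @ a # ys @ b # zs)" and e: "{a,b} \<in> X1"
  have "is_path X0 X1 (a # ys @ [b])" using is_path_mid[of X0 X1 xs "a # ys @ [b]" zs] p by simp
  moreover have "is_path X0 X1 [a,b]" using e edge_in by (auto intro: is_path_pair)
  ultimately have "a # ys @ [b] = [a,b]" using path_uniq[of "a # ys @ [b]" "[a,b]"] by simp
  then show ?thesis by simp
qed

lemma no_chord: "is_path X0 X1 p \<Longrightarrow> {a,b} \<in> X1 \<Longrightarrow> a \<in> set p \<Longrightarrow> b \<in> set p \<Longrightarrow> {a,b} \<in> set (path_edges p)"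
proof -
  assume p: "is_path X0 X1 p" and e: "{a,b} \<in> X1" and a: "a \<in> set p" and b: "b \<in> set p"
  have ab: "a \<noteq> b" using edge_neq e by blast
  have key: "{c,d} \<in> set (path_edges (us @ c # d # vs))" for us vs :: "'a list" and c d
    by (cases "us = []") (auto simp: path_edges_append)
  obtain xs rest where pr: "p = xs @ a # rest" using split_list[OF a] by blast
  show ?thesis
  proof (cases "b \<in> set rest")
    case True
    then obtain ys zs where r: "rest = ys @ b # zs" using split_list[OF True] by blast
    then have pp: "p = xs @ a # ys @ b # zs" using pr by simp
    then have "ys = []" using no_chord_aux[of xs a ys b zs] p e by simp
    then show ?thesis using key[where us=xs and vs=zs and c=a and d=b] pp by simp
  next
    case False
    then have bx: "b \<in> set xs" using b ab pr by auto
    obtain xs1 ys where r: "xs = xs1 @ b # ys" using split_list[OF bx] by blast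
    then have pp: "p = xs1 @ b # ys @ a # rest" using pr by simp
    have e': "{b,a} \<in> X1" using e by (simp add: insert_commute)
    have "ys = []" using no_chord_aux[of xs1 b ys a rest] p e' pp by simp
    then show ?thesis using key[where us=xs1 and vs=rest and c=b and d=a] pp by (simp add: insert_commute)
  qed
qed

lemma gp_snoc: "x \<in> X0 \<Longrightarrow> y \<in> X0 \<Longrightarrow> {y,z} \<in> X1 \<Longrightarrow> z \<notin> set (gp x y) \<Longrightarrow> gp x z = gp x y @ [z]"
proof -
  assume x: "x \<in> X0" and y: "y \<in> X0" and e: "{y,z} \<in> X1" and z: "z \<notin> set (gp x y)"
  have zz: "z \<in> X0" using e edge_in by blast
  have "{last (gp x y), z} \<in> X1" using e gp_last[OF x y] by simp
  then have "is_path X0 X1 (gp x y @ [z])"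
    using is_path_snoc[OF gp_path[OF x y], of z] z zz by blast
  moreover have "hd (gp x y @ [z]) = x" using gp_hd[OF x y] gp_ne[OF x y] by simp
  ultimately show ?thesis using gp_eqI[of "gp x y @ [z]" x z] by simp
qed

lemma gp_prefix: "x \<in> X0 \<Longrightarrow> y \<in> X0 \<Longrightarrow> gp x y = xs @ z # ys \<Longrightarrow> gp x z = xs @ [z]"
proof -
  assume x: "x \<in> X0" and y: "y \<in> X0" and g: "gp x y = xs @ z # ys"
  have "is_path X0 X1 ((xs @ [z]) @ ys)" using gp_path[OF x y] g by simp
  then have "is_path X0 X1 (xs @ [z])" by (rule is_path_appendD1) simp
  moreover have "hd (xs @ [z]) = x" using gp_hd[OF x y] g by (cases xs) auto
  ultimately show ?thesis using gp_eqI[of "xs @ [z]" x z] by simp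
qed

lemma gp_refl: "x \<in> X0 \<Longrightarrow> gp x x = [x]"
  by (rule gp_eqI) auto

lemma gp_rev: "x \<in> X0 \<Longrightarrow> y \<in> X0 \<Longrightarrow> gp y x = rev (gp x y)"
  by (rule gp_eqI) (auto simp: gp_path gp_ne gp_hd gp_last hd_rev last_rev)

lemma gp_distinct: "x \<in> X0 \<Longrightarrow> y \<in> X0 \<Longrightarrow> distinct (gp x y)"
  using gp_path path_distinct by blast

lemma gp_reach:
  assumes E': "E' \<subseteq> X1" and r: "(x,y) \<in> {(a,b). {a,b} \<in> E'}\<^sup>*" and x: "x \<in> X0"
  shows "y \<in> X0 \<and> set (gp x y) \<subseteq> {z. (x,z) \<in> {(a,b). {a,b} \<in> E'}\<^sup>*}"
  using r
proof (induct rule: rtrancl_induct)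
  case base then show ?case using gp_refl[OF x] x by auto
next
  case (step y z)
  have yz: "{y,z} \<in> X1" using step(2) E' by auto
  then have z: "z \<in> X0" using edge_in by auto
  have rz: "(x,z) \<in> {(a,b). {a,b} \<in> E'}\<^sup>*" using step(1,2) by (rule rtrancl_into_rtrancl)
  show ?case
  proof (cases "z \<in> set (gp x y)")
    case True
    then obtain xs ys where "gp x y = xs @ z # ys" using split_list by metis
    then have "gp x z = xs @ [z]" using gp_prefix x step(3) by blast
    then show ?thesis using step(3) z \<open>gp x y = xs @ z # ys\<close> by auto
  next
    case False
    then have "gp x z = gp x y @ [z]" using gp_snoc x step(3) yz by blast
    then show ?thesis using step(3) z rz by auto
  qed
qed

lemma path_reach: "is_path X0 X1 p \<Longrightarrow> set (path_edges p) \<subseteq> E' \<Longrightarrow> (hd p, last p) \<in> {(a,b). {a,b} \<in> E'}\<^sup>*"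
proof (induct p rule: induct_list012)
  case (3 x y zs)
  have "is_path X0 X1 (y # zs)" using is_path_appendD2[of X0 X1 "[x]" "y # zs"] 3(3) by simp
  then have "(y, last (y # zs)) \<in> {(a,b). {a,b} \<in> E'}\<^sup>*" using 3 by auto
  moreover have "(x,y) \<in> {(a,b). {a,b} \<in> E'}" using 3(4) by auto
  ultimately show ?case by (simp add: converse_rtrancl_into_rtrancl)
qed (auto simp: is_path_alt)

end

definition Wt :: "('a,'b) dtree_scheme \<Rightarrow> ('a set \<Rightarrow> 'a \<Rightarrow> int) \<Rightarrow> 'a set set \<Rightarrow> 'a \<Rightarrow> int" where
  "Wt S q F u = (\<Prod>\<epsilon>\<in>{\<epsilon>\<in>Es S. u \<in> \<epsilon> \<and> \<epsilon> \<notin> F}. q \<epsilon> u)"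

definition Pr :: "('a,'b) dtree_scheme \<Rightarrow> 'a list \<Rightarrow> int" where
  "Pr S p = (\<Prod>\<epsilon>\<in>incident S p. qpath S \<epsilon> p)"

lemma xval_Pr: "xval S v \<alpha> = fd S \<alpha> * Pr S (gam S v \<alpha>)"
  by (simp add: xval_def Pr_def)

lemma Wt_cong: "{e\<in>Es S. u\<in>e} \<inter> F = {e\<in>Es S. u\<in>e} \<inter> F' \<Longrightarrow> Wt S q F u = Wt S q F' u"
  unfolding Wt_def by (rule arg_cong[where f="\<lambda>A. prod _ A"]) blast

lemma Wt_q_cong: "(\<And>e. e \<in> Es S \<Longrightarrow> u \<in> e \<Longrightarrow> e \<notin> F \<Longrightarrow> q e u = q' e u) \<Longrightarrow> Wt S q F u = Wt S q' F u"
  unfolding Wt_def by (rule prod.cong) auto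

lemma Wt_all: "{e\<in>Es S. u\<in>e} \<subseteq> F \<Longrightarrow> Wt S q F u = 1"
  unfolding Wt_def by (rule prod.neutral) auto

lemma Wt_upd[simp]: "Wt (S\<lparr>qd := q'\<rparr>) q F u = Wt S q F u"
  by (simp add: Wt_def)

locale dt =
  fixes S :: "('a,'b) dtree_scheme"
  assumes dtS: "decorated_tree S"
begin

sublocale tree "cells S" "Es S"
  using dtS by unfold_locales (simp add: decorated_tree_def)

lemma gam_gp: "gam S x y = gp x y"
  by (simp add: gam_def gp_def)

lemma finEs: "finite (Es S)" by (rule finX1)

lemma Wt_remove: "finite (Es S) \<Longrightarrow> e \<in> Es S \<Longrightarrow> u \<in> e \<Longrightarrow> e \<notin> F \<Longrightarrow> Wt S q F u = q e u * Wt S q (insert e F) u"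
proof -
  assume "finite (Es S)" "e \<in> Es S" "u \<in> e" "e \<notin> F"
  then have "{\<epsilon>\<in>Es S. u \<in> \<epsilon> \<and> \<epsilon> \<notin> F} = insert e {\<epsilon>\<in>Es S. u \<in> \<epsilon> \<and> \<epsilon> \<notin> insert e F}" by auto
  then show ?thesis unfolding Wt_def using \<open>finite (Es S)\<close> by simp
qed

lemma edge_two: "\<epsilon> \<in> Es S \<Longrightarrow> u \<in> \<epsilon> \<Longrightarrow> u' \<in> \<epsilon> \<Longrightarrow> u \<noteq> u' \<Longrightarrow> \<epsilon> = {u,u'}"
  using edge_form by blast

lemma Pr_cells_gen:
  assumes p: "is_path (cells S) (Es S) p"
  shows "(\<Prod>\<epsilon>\<in>incident S p. q \<epsilon> (THE u. u \<in> set p \<and> u \<in> \<epsilon>)) = (\<Prod>u\<in>set p. Wt S q (set (path_edges p)) u)"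
proof -
  define A where "A u = {\<epsilon>\<in>Es S. u \<in> \<epsilon> \<and> \<epsilon> \<notin> set (path_edges p)}" for u
  have inc: "incident S p = (\<Union>u\<in>set p. A u)"
    unfolding incident_def A_def by blast
  have uniq: "u' = u" if "\<epsilon> \<in> A u" "u \<in> set p" "u' \<in> set p" "u' \<in> \<epsilon>" for \<epsilon> u u'
  proof (rule ccontr)
    assume ne: "u' \<noteq> u"
    have "\<epsilon> \<in> Es S" "u \<in> \<epsilon>" "\<epsilon> \<notin> set (path_edges p)" using that(1) by (auto simp: A_def)
    then have "\<epsilon> = {u,u'}" using edge_two that(4) ne by blast
    then have "\<epsilon> \<in> set (path_edges p)" using no_chord[OF p] \<open>\<epsilon> \<in> Es S\<close> that(2,3) by simp
    then show False using \<open>\<epsilon> \<notin> set (path_edges p)\<close> by simp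
  qed
  have disj: "\<forall>i\<in>set p. \<forall>j\<in>set p. i \<noteq> j \<longrightarrow> A i \<inter> A j = {}"
  proof (intro ballI impI)
    fix i j assume "i \<in> set p" "j \<in> set p" "i \<noteq> j"
    then show "A i \<inter> A j = {}" using uniq[of _ i j] by (auto simp: A_def)
  qed
  have fin: "\<forall>i\<in>set p. finite (A i)" using finX1 by (auto simp: A_def)
  have "(\<Prod>\<epsilon>\<in>incident S p. q \<epsilon> (THE u. u \<in> set p \<and> u \<in> \<epsilon>))
      = (\<Prod>u\<in>set p. \<Prod>\<epsilon>\<in>A u. q \<epsilon> (THE u. u \<in> set p \<and> u \<in> \<epsilon>))"
    unfolding inc by (rule prod.UNION_disjoint[OF _ fin disj]) simp
  also have "\<dots> = (\<Prod>u\<in>set p. \<Prod>\<epsilon>\<in>A u. q \<epsilon> u)"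
  proof (rule prod.cong[OF refl], rule prod.cong[OF refl])
    fix u \<epsilon> assume u: "u \<in> set p" and e: "\<epsilon> \<in> A u"
    have "(THE u'. u' \<in> set p \<and> u' \<in> \<epsilon>) = u"
      by (rule the_equality) (use u e uniq in \<open>auto simp: A_def\<close>)
    then show "q \<epsilon> (THE u. u \<in> set p \<and> u \<in> \<epsilon>) = q \<epsilon> u" by simp
  qed
  also have "\<dots> = (\<Prod>u\<in>set p. Wt S q (set (path_edges p)) u)"
    by (simp add: Wt_def A_def)
  finally show ?thesis .
qed

lemma Pr_cells:
  "is_path (cells S) (Es S) p \<Longrightarrow> Pr S p = (\<Prod>u\<in>set p. Wt S (qd S) (set (path_edges p)) u)"
  unfolding Pr_def qpath_def using Pr_cells_gen[of p "qd S"] by simp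

lemma Pr_cells_upd:
  "is_path (cells S) (Es S) p \<Longrightarrow> Pr (S\<lparr>qd := q\<rparr>) p = (\<Prod>u\<in>set p. Wt S q (set (path_edges p)) u)"
  unfolding Pr_def qpath_def using Pr_cells_gen[of p q] by (simp add: incident_def)

lemma Pr_rev: "is_path (cells S) (Es S) p \<Longrightarrow> Pr S (rev p) = Pr S p"
  using Pr_cells[of p] Pr_cells[of "rev p"] by (simp add: path_edges_rev)

end

locale rooted = dt +
  fixes r :: 'a
  assumes r_cell: "r \<in> cells S"
begin

abbreviation rp where "rp x \<equiv> gp r x"
definition par where "par x = last (butlast (rp x))"
definition inn where "inn x = {par x, x}"

lemma rp_path: "x \<in> cells S \<Longrightarrow> is_path (cells S) (Es S) (rp x)"
  using gp_path r_cell by blast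
lemma rp_hd: "x \<in> cells S \<Longrightarrow> hd (rp x) = r"
  using gp_hd r_cell by blast
lemma rp_last: "x \<in> cells S \<Longrightarrow> last (rp x) = x"
  using gp_last r_cell by blast
lemma rp_ne: "x \<in> cells S \<Longrightarrow> rp x \<noteq> []"
  using gp_ne r_cell by blast
lemma rp_set: "x \<in> cells S \<Longrightarrow> set (rp x) \<subseteq> cells S"
  using gp_set r_cell by blast
lemma rp_r: "rp r = [r]"
  using gp_refl r_cell by blast
lemma rp_distinct: "x \<in> cells S \<Longrightarrow> distinct (rp x)"
  using gp_distinct r_cell by blast
lemma r_in_rp: "x \<in> cells S \<Longrightarrow> r \<in> set (rp x)"
  using rp_hd rp_ne hd_in_set by metis
lemma x_in_rp: "x \<in> cells S \<Longrightarrow> x \<in> set (rp x)"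
  using rp_last rp_ne last_in_set by metis

lemma rp_basic:
  assumes x: "x \<in> cells S" and xr: "x \<noteq> r"
  shows "rp x = rp (par x) @ [x] \<and> par x \<in> cells S \<and> x \<notin> set (rp (par x)) \<and> inn x \<in> Es S"
proof -
  define bl where "bl = butlast (rp x)"
  have rx: "rp x = bl @ [x]" using rp_ne[OF x] rp_last[OF x] append_butlast_last_id bl_def by metis
  have blne: "bl \<noteq> []"
  proof
    assume "bl = []"
    then have "rp x = [x]" using rx by simp
    then show False using rp_hd[OF x] xr by simp
  qed
  have bl2: "bl = butlast bl @ [last bl]" using blne by simp
  then have "rp x = butlast bl @ last bl # [x]" using rx by (metis append.assoc append_Cons append_Nil)
  then have rpl: "rp (last bl) = butlast bl @ [last bl]" using gp_prefix[OF r_cell x] by blast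
  have pl: "par x = last bl" using bl_def par_def by simp
  have "set bl \<subseteq> cells S" using rp_set[OF x] rx by auto
  then have plc: "last bl \<in> cells S" using blne by auto
  have "distinct (bl @ [x])" using rp_distinct[OF x] rx by simp
  then have xn: "x \<notin> set bl" by simp
  have "set (path_edges (rp x)) \<subseteq> Es S" using gp_edges[OF r_cell x] .
  moreover have "{last bl, x} \<in> set (path_edges (rp x))" using rx blne by (simp add: path_edges_snoc)
  ultimately have "{last bl, x} \<in> Es S" by blast
  then show ?thesis using rx rpl bl2 pl plc xn by (simp add: inn_def)
qed

lemma rp_snoc: "x \<in> cells S \<Longrightarrow> x \<noteq> r \<Longrightarrow> rp x = rp (par x) @ [x]"
  using rp_basic by blast
lemma par_cell: "x \<in> cells S \<Longrightarrow> x \<noteq> r \<Longrightarrow> par x \<in> cells S"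
  using rp_basic by blast
lemma x_notin_par: "x \<in> cells S \<Longrightarrow> x \<noteq> r \<Longrightarrow> x \<notin> set (rp (par x))"
  using rp_basic by blast
lemma inn_edge: "x \<in> cells S \<Longrightarrow> x \<noteq> r \<Longrightarrow> inn x \<in> Es S"
  using rp_basic by blast
lemma par_neq: "x \<in> cells S \<Longrightarrow> x \<noteq> r \<Longrightarrow> par x \<noteq> x"
  using x_notin_par x_in_rp par_cell by metis
lemma x_in_inn: "x \<in> inn x" and par_in_inn: "par x \<in> inn x"
  by (auto simp: inn_def)

lemma PE_rp: "x \<in> cells S \<Longrightarrow> x \<noteq> r \<Longrightarrow>
   set (path_edges (rp x)) = insert (inn x) (set (path_edges (rp (par x))))"
  using rp_snoc[of x] rp_ne[OF par_cell, of x] rp_last[OF par_cell, of x]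
  by (simp add: path_edges_snoc inn_def)

lemma inn_notin_par: "x \<in> cells S \<Longrightarrow> x \<noteq> r \<Longrightarrow> inn x \<notin> set (path_edges (rp (par x)))"
  using x_notin_par path_edges_subset x_in_inn by blast

lemma PE_rp_at: "x \<in> cells S \<Longrightarrow> x \<noteq> r \<Longrightarrow>
   {e\<in>Es S. x \<in> e} \<inter> set (path_edges (rp x)) = {inn x}"
proof -
  assume x: "x \<in> cells S" "x \<noteq> r"
  have "e \<notin> set (path_edges (rp (par x)))" if "x \<in> e" for e
    using that x_notin_par[OF x] path_edges_subset by blast
  then show ?thesis using PE_rp[OF x] inn_edge[OF x] x_in_inn by auto
qed

lemma child:
  assumes e: "e \<in> Es S" and y: "y \<in> e" and ne: "y = r \<or> e \<noteq> inn y"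
  obtains c where "e = {y,c}" "c \<in> cells S" "c \<noteq> r" "par c = y" "inn c = e" "c \<noteq> y"
proof -
  obtain c where ec: "e = {y,c}" "y \<noteq> c" using edge_form[OF e y] by blast
  have yc: "y \<in> cells S" "c \<in> cells S" using edge_in e ec by auto
  have cn: "c \<notin> set (rp y)"
  proof
    assume "c \<in> set (rp y)"
    then have ein: "e \<in> set (path_edges (rp y))" using no_chord[OF rp_path[OF yc(1)]] e ec x_in_rp[OF yc(1)] by simp
    show False
    proof (cases "y = r")
      case True then show False using ein rp_r by simp
    next
      case False
      then have "e \<noteq> inn y" using ne by simp
      then have "e \<in> set (path_edges (rp (par y)))" using ein PE_rp[OF yc(1) False] by simp
      then have "y \<in> set (rp (par y))" using path_edges_subset y by blast
      then show False using x_notin_par[OF yc(1) False] by simp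
    qed
  qed
  have rc: "rp c = rp y @ [c]" using gp_snoc[OF r_cell yc(1), of c] e ec cn by simp
  have cr: "c \<noteq> r" using cn r_in_rp[OF yc(1)] by blast
  have pc: "par c = y" unfolding par_def using rc rp_last[OF yc(1)] by simp
  show ?thesis using that[of c] ec yc cr pc by (simp add: inn_def insert_commute)
qed

lemma inn_inj: "x \<in> cells S \<Longrightarrow> x \<noteq> r \<Longrightarrow> x' \<in> cells S \<Longrightarrow> x' \<noteq> r \<Longrightarrow> inn x = inn x' \<Longrightarrow> x = x'"
proof (rule ccontr)
  assume x: "x \<in> cells S" "x \<noteq> r" and x': "x' \<in> cells S" "x' \<noteq> r" and eq: "inn x = inn x'" and ne: "x \<noteq> x'"
  have "x \<in> inn x'" using eq x_in_inn by metis
  then have px': "par x' = x" using ne by (auto simp: inn_def)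
  have "x' \<in> inn x" using eq x_in_inn by metis
  then have px: "par x = x'" using ne by (auto simp: inn_def)
  have "length (rp x) = length (rp x') + 1" using rp_snoc[OF x] px by simp
  moreover have "length (rp x') = length (rp x) + 1" using rp_snoc[OF x'] px' by simp
  ultimately show False by simp
qed

lemma inn_surj: "e \<in> Es S \<Longrightarrow> \<exists>c. c \<in> cells S \<and> c \<noteq> r \<and> inn c = e"
proof -
  assume e: "e \<in> Es S"
  obtain a where a: "a \<in> e" using edge_card[OF e] by fastforce
  have ac: "a \<in> cells S" using a e edge_sub by blast
  show ?thesis
  proof (cases "a = r \<or> e \<noteq> inn a")
    case True
    then show ?thesis using child[OF e a] by metis
  next
    case False
    then show ?thesis using ac by auto
  qed
qed

lemma rp_prefix_inn: "x \<in> cells S \<Longrightarrow> u \<in> set (rp x) \<Longrightarrow> u \<noteq> r \<Longrightarrow> inn u \<in> set (path_edges (rp x))"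
proof -
  assume x: "x \<in> cells S" and u: "u \<in> set (rp x)" and ur: "u \<noteq> r"
  obtain xs ys where xy: "rp x = xs @ u # ys" using split_list[OF u] by blast
  then have ru: "rp u = xs @ [u]" using gp_prefix[OF r_cell x] by blast
  have uc: "u \<in> cells S" using u rp_set[OF x] by blast
  have "inn u \<in> set (path_edges (rp u))" using PE_rp[OF uc ur] by simp
  moreover have "set (path_edges (rp u)) \<subseteq> set (path_edges (rp x))"
  proof (cases ys)
    case Nil then show ?thesis using xy ru by simp
  next
    case (Cons z zs)
    then have rx: "rp x = (xs @ [u]) @ (z # zs)" using xy by simp
    have "path_edges ((xs @ [u]) @ (z # zs)) = path_edges (xs @ [u]) @ {u, z} # path_edges (z # zs)"
      using path_edges_append[of "xs @ [u]" "z # zs"] by simp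
    then show ?thesis using ru rx by auto
  qed
  ultimately show ?thesis by blast
qed

lemma rp_prefix_set: "x \<in> cells S \<Longrightarrow> u \<in> set (rp x) \<Longrightarrow> set (rp u) \<subseteq> set (rp x)"
proof -
  assume x: "x \<in> cells S" and u: "u \<in> set (rp x)"
  obtain xs ys where xy: "rp x = xs @ u # ys" using split_list[OF u] by blast
  then have "rp u = xs @ [u]" using gp_prefix[OF r_cell x] by blast
  then show ?thesis using xy by auto
qed

definition K where "K y = {e\<in>Es S. y \<in> e \<and> e \<noteq> inn y}"

lemma K_eq: "y \<in> cells S \<Longrightarrow> y \<noteq> r \<Longrightarrow> K y = {e\<in>Es S. y \<in> e \<and> e \<notin> set (path_edges (rp y))}"
  using PE_rp_at[of y] by (auto simp: K_def)

lemma valency_K: "y \<in> cells S \<Longrightarrow> y \<noteq> r \<Longrightarrow> valency S y = card (K y) + 1"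
proof -
  assume y: "y \<in> cells S" "y \<noteq> r"
  have "{e\<in>Es S. y \<in> e} = insert (inn y) (K y)" using inn_edge[OF y] x_in_inn by (auto simp: K_def)
  moreover have "inn y \<notin> K y" by (simp add: K_def)
  moreover have "finite (K y)" using finX1 by (simp add: K_def)
  ultimately show ?thesis by (simp add: valency_def)
qed

lemma Wt_rp_self: "y \<in> cells S \<Longrightarrow> y \<noteq> r \<Longrightarrow> Wt S q (set (path_edges (rp y))) y = Wt S q {inn y} y"
  by (rule Wt_cong) (use PE_rp_at[of y] inn_edge[of y] x_in_inn[of y] in auto)

end

lemma gcd_sub_dvd: "(b::int) dvd s \<Longrightarrow> gcd (s - a) b = gcd a b"
  by (metis (no_types, lifting) ext gcd.left_commute gcd_abs2_int gcd_diff2 gcd_proj1_if_dvd_int)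

lemma local_id:
  fixes f :: "'a \<Rightarrow> int"
  assumes fin: "finite K" and ge: "\<forall>e\<in>K. f e \<ge> 1" and c1: "card {e\<in>K. f e \<noteq> 1} \<le> 1"
  shows "(\<Prod>e\<in>K. f e) * (int (card K) - 1) = (\<Sum>e\<in>K. \<Prod>e'\<in>K - {e}. f e') - 1"
proof (cases "\<exists>e0\<in>K. f e0 \<noteq> 1")
  case False
  then have one: "\<forall>e\<in>K. f e = 1" by blast
  have "(\<Prod>e\<in>K. f e) = 1" using one by simp
  moreover have "(\<Sum>e\<in>K. \<Prod>e'\<in>K - {e}. f e') = (\<Sum>e\<in>K. 1)"
    by (rule sum.cong) (use one in auto)
  ultimately show ?thesis by simp
next
  case True
  then obtain e0 where e0: "e0 \<in> K" "f e0 \<noteq> 1" by blast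
  have one: "f e = 1" if "e \<in> K" "e \<noteq> e0" for e
  proof (rule ccontr)
    assume "f e \<noteq> 1"
    then have "{e0, e} \<subseteq> {e\<in>K. f e \<noteq> 1}" using e0 that by auto
    then have "card {e0, e} \<le> card {e\<in>K. f e \<noteq> 1}" using fin by (intro card_mono) auto
    then show False using c1 that(2) by simp
  qed
  have p1: "(\<Prod>e'\<in>K - {e0}. f e') = 1" using one by (intro prod.neutral) auto
  have P: "(\<Prod>e\<in>K. f e) = f e0" using prod.remove[OF fin e0(1), of f] p1 by simp
  have p2: "(\<Prod>e'\<in>K - {e}. f e') = f e0" if "e \<in> K - {e0}" for e
  proof -
    have "(\<Prod>e'\<in>K - {e}. f e') = f e0 * (\<Prod>e'\<in>K - {e} - {e0}. f e')"
      using prod.remove[of "K - {e}" e0 f] fin e0 that by auto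
    moreover have "(\<Prod>e'\<in>K - {e} - {e0}. f e') = 1" using one by (intro prod.neutral) auto
    ultimately show ?thesis by simp
  qed
  have "(\<Sum>e\<in>K. \<Prod>e'\<in>K - {e}. f e') = (\<Prod>e'\<in>K - {e0}. f e') + (\<Sum>e\<in>K - {e0}. \<Prod>e'\<in>K - {e}. f e')"
    using sum.remove[OF fin e0(1)] by blast
  also have "\<dots> = 1 + (\<Sum>e\<in>K - {e0}. f e0)" using p1 p2 by simp
  also have "\<dots> = 1 + int (card (K - {e0})) * f e0" by simp
  also have "int (card (K - {e0})) = int (card K) - 1" using fin e0(1) card_gt_0_iff[of K] by auto
  finally show ?thesis using P by (simp add: algebra_simps)
qed

lemma valency_upd[simp]: "valency (S\<lparr>qd := q\<rparr>) = valency S"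
  by (simp add: valency_def fun_eq_iff)
lemma cells_upd[simp]: "cells (S\<lparr>qd := q\<rparr>) = cells S"
  by (simp add: cells_def)
lemma gam_upd[simp]: "gam (S\<lparr>qd := q\<rparr>) = gam S"
  by (simp add: gam_def fun_eq_iff)
lemma incident_upd[simp]: "incident (S\<lparr>qd := q\<rparr>) = incident S"
  by (simp add: incident_def fun_eq_iff)
lemma A0_upd[simp]: "A0 (S\<lparr>qd := q\<rparr>) = A0 S"
  by (simp add: A0_def)

lemma Qf_Wt: "Qf S e x = Wt S (qd S) {e} x"
  unfolding Qf_def Wt_def by (rule arg_cong[where f="\<lambda>A. prod _ A"]) auto

lemma detf_sym: "detf S u v = detf S v u"
  unfolding detf_def by (simp add: insert_commute)

locale central = rooted S r for S :: "('a,'b) dtree_scheme" and r +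
  assumes r_arrow: "r \<in> As S"
    and cen: "\<forall>y\<in>Vs S. (\<forall>e\<in>Es S. y \<in> e \<and> e \<notin> set (path_edges (gam S r y)) \<longrightarrow> qd S e y \<ge> 1) \<and>
         card {e\<in>Es S. y \<in> e \<and> e \<notin> set (path_edges (gam S r y)) \<and> qd S e y \<noteq> 1} \<le> 1"
begin

lemma dt_facts: "finite (Vs S)" "finite (As S)" "Vs S \<inter> As S = {}"
  "\<And>\<alpha>. \<alpha> \<in> As S \<Longrightarrow> valency S \<alpha> = 1"
  "\<And>e \<alpha>. e \<in> Es S \<Longrightarrow> \<alpha> \<in> As S \<Longrightarrow> \<alpha> \<in> e \<Longrightarrow> qd S e \<alpha> = 1"
  "\<And>v e e'. v \<in> Vs S \<Longrightarrow> e \<in> Es S \<Longrightarrow> e' \<in> Es S \<Longrightarrow> v \<in> e \<Longrightarrow> v \<in> e' \<Longrightarrow> e \<noteq> e' \<Longrightarrow> gcd (qd S e v) (qd S e' v) = 1"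
  using dtS unfolding decorated_tree_def by auto

lemma r_notV: "r \<notin> Vs S" using dt_facts(3) r_arrow by blast

lemma cells_VA: "cells S = Vs S \<union> As S" by (simp add: cells_def)

lemma K_arrow: "y \<in> As S \<Longrightarrow> y \<noteq> r \<Longrightarrow> K y = {}"
  using valency_K[of y] dt_facts(4)[of y] cells_VA finX1 by (auto simp: K_def)

lemma K_fin: "finite (K y)" using finX1 by (simp add: K_def)

lemma inn_in_K_par: "c \<in> cells S \<Longrightarrow> c \<noteq> r \<Longrightarrow> par c \<noteq> r \<Longrightarrow> inn c \<in> K (par c)"
proof -
  assume c: "c \<in> cells S" "c \<noteq> r" and pr: "par c \<noteq> r"
  have pc: "par c \<in> cells S" using par_cell[OF c] .
  have "inn c \<noteq> inn (par c)"
    using inn_inj[OF c pc pr] par_neq[OF c] by metis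
  then show ?thesis using inn_edge[OF c] par_in_inn by (simp add: K_def)
qed

lemma par_V: "c \<in> cells S \<Longrightarrow> c \<noteq> r \<Longrightarrow> par c \<noteq> r \<Longrightarrow> par c \<in> Vs S"
  using inn_in_K_par K_arrow par_cell cells_VA by blast

lemma cenK: "y \<in> Vs S \<Longrightarrow> (\<forall>e\<in>K y. qd S e y \<ge> 1) \<and> card {e\<in>K y. qd S e y \<noteq> 1} \<le> 1"
proof -
  assume y: "y \<in> Vs S"
  have yc: "y \<in> cells S" "y \<noteq> r" using y r_notV cells_VA by auto
  have "K y = {e\<in>Es S. y \<in> e \<and> e \<notin> set (path_edges (gam S r y))}"
    using K_eq[OF yc] gam_gp by simp
  moreover have "{e\<in>K y. qd S e y \<noteq> 1} = {e\<in>Es S. y \<in> e \<and> e \<notin> set (path_edges (gam S r y)) \<and> qd S e y \<noteq> 1}"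
    using calculation by auto
  ultimately show ?thesis using cen y by auto
qed

lemma edges_r: "e \<in> Es S \<Longrightarrow> r \<in> e \<Longrightarrow> e' \<in> Es S \<Longrightarrow> r \<in> e' \<Longrightarrow> e = e'"
proof -
  assume a: "e \<in> Es S" "r \<in> e" "e' \<in> Es S" "r \<in> e'"
  have "card {e\<in>Es S. r \<in> e} = 1" using dt_facts(4)[OF r_arrow] by (simp add: valency_def)
  then show ?thesis using a by (metis (mono_tags, lifting) card_1_singletonE mem_Collect_eq singletonD)
qed

definition Pi where "Pi y = Wt S (qd S) {inn y} y"
definition G where "G y = (\<Prod>u\<in>set (rp y) - {y}. Wt S (qd S) (set (path_edges (rp y))) u)"
definition sv where "sv y = Pi y * (G y)^2"
definition qs where "qs e x = (if e \<in> Es S \<and> x \<in> e then (if x \<in> Vs S \<and> e = inn x then sv x - qd S e x else qd S e x) else 0)"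
definition P where "P y = Pr S (rp y)"

lemma Pi_K: "Pi y = (\<Prod>e\<in>K y. qd S e y)"
  unfolding Pi_def Wt_def K_def by (rule arg_cong[where f="\<lambda>A. prod _ A"]) auto

lemma Pi_Qf: "Pi y = Qf S (inn y) y" by (simp add: Pi_def Qf_Wt)

lemma P_split: "y \<in> cells S \<Longrightarrow> y \<noteq> r \<Longrightarrow> P y = G y * Pi y"
proof -
  assume y: "y \<in> cells S" "y \<noteq> r"
  have "P y = (\<Prod>u\<in>set (rp y). Wt S (qd S) (set (path_edges (rp y))) u)"
    unfolding P_def by (rule Pr_cells[OF rp_path[OF y(1)]])
  also have "\<dots> = Wt S (qd S) (set (path_edges (rp y))) y * G y"
    unfolding G_def using prod.remove[of "set (rp y)" y] x_in_rp[OF y(1)] by simp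
  also have "Wt S (qd S) (set (path_edges (rp y))) y = Pi y"
    unfolding Pi_def by (rule Wt_rp_self[OF y])
  finally show ?thesis by simp
qed

lemma par_r_edges: "c \<in> cells S \<Longrightarrow> c \<noteq> r \<Longrightarrow> par c = r \<Longrightarrow> {e\<in>Es S. r \<in> e} = {inn c}"
proof -
  assume c: "c \<in> cells S" "c \<noteq> r" "par c = r"
  have ic: "inn c \<in> Es S" "r \<in> inn c" using inn_edge[OF c(1,2)] par_in_inn[of c] c(3) by auto
  show ?thesis
  proof
    show "{e \<in> Es S. r \<in> e} \<subseteq> {inn c}" using edges_r[OF _ _ ic] by blast
  qed (use ic in auto)
qed

lemma G_top: "c \<in> cells S \<Longrightarrow> c \<noteq> r \<Longrightarrow> par c = r \<Longrightarrow> G c = 1"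
proof -
  assume c: "c \<in> cells S" "c \<noteq> r" and pr: "par c = r"
  have "rp c = [r, c]" using rp_snoc[OF c] pr rp_r by simp
  then have s: "set (rp c) - {c} = {r}" using c by auto
  have "Wt S (qd S) (set (path_edges (rp c))) r = 1"
    by (rule Wt_all) (use par_r_edges[OF c pr] PE_rp[OF c] in auto)
  then show ?thesis unfolding G_def s by simp
qed

lemma G_step:
  assumes c: "c \<in> cells S" "c \<noteq> r" and pz: "par c \<noteq> r"
  shows "G c = G (par c) * Wt S (qd S) {inn (par c), inn c} (par c)"
proof -
  let ?z = "par c"
  have z: "?z \<in> cells S" "?z \<noteq> r" using par_cell[OF c] pz by auto
  have s: "set (rp c) - {c} = set (rp ?z)" using rp_snoc[OF c] x_notin_par[OF c] by auto
  have pe: "set (path_edges (rp c)) = insert (inn c) (set (path_edges (rp ?z)))" using PE_rp[OF c] .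
  have A: "Wt S (qd S) (set (path_edges (rp c))) u = Wt S (qd S) (set (path_edges (rp ?z))) u"
    if "u \<in> set (rp ?z) - {?z}" for u
  proof -
    have "u \<notin> inn c" using that x_notin_par[OF c] by (auto simp: inn_def)
    then show ?thesis unfolding pe by (intro Wt_cong) auto
  qed
  have B: "Wt S (qd S) (set (path_edges (rp c))) ?z = Wt S (qd S) {inn ?z, inn c} ?z"
    unfolding pe by (rule Wt_cong) (use PE_rp_at[OF z] inn_edge[OF c] par_in_inn[of c] inn_edge[OF z] x_in_inn[of ?z] in auto)
  have "G c = (\<Prod>u\<in>set (rp ?z). Wt S (qd S) (set (path_edges (rp c))) u)"
    unfolding G_def s ..
  also have "\<dots> = Wt S (qd S) (set (path_edges (rp c))) ?z * (\<Prod>u\<in>set (rp ?z) - {?z}. Wt S (qd S) (set (path_edges (rp c))) u)"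
    using prod.remove[of "set (rp ?z)" ?z] x_in_rp[OF z(1)] by simp
  also have "(\<Prod>u\<in>set (rp ?z) - {?z}. Wt S (qd S) (set (path_edges (rp c))) u) = G ?z"
    unfolding G_def using A by (intro prod.cong) auto
  finally show ?thesis using B by simp
qed

lemma Pi_split: "c \<in> cells S \<Longrightarrow> c \<noteq> r \<Longrightarrow> par c \<noteq> r \<Longrightarrow>
   Pi (par c) = qd S (inn c) (par c) * Wt S (qd S) {inn (par c), inn c} (par c)"
proof -
  assume c: "c \<in> cells S" "c \<noteq> r" "par c \<noteq> r"
  have "inn c \<noteq> inn (par c)" using inn_in_K_par[OF c] by (simp add: K_def)
  then show ?thesis unfolding Pi_def using Wt_remove[OF finX1 inn_edge[OF c(1,2)] par_in_inn[of c], of "{inn (par c)}"]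
    by (simp add: insert_commute)
qed

lemma P_step: "c \<in> cells S \<Longrightarrow> c \<noteq> r \<Longrightarrow> qd S (inn c) (par c) * P c = P (par c) * Pi c"
proof -
  assume c: "c \<in> cells S" "c \<noteq> r"
  let ?y = "par c"
  have y: "?y \<in> cells S" using par_cell[OF c] .
  have pe: "set (path_edges (rp c)) = insert (inn c) (set (path_edges (rp ?y)))" using PE_rp[OF c] .
  have nin: "inn c \<notin> set (path_edges (rp ?y))" using inn_notin_par[OF c] .
  have cy: "c \<notin> set (rp ?y)" using x_notin_par[OF c] .
  have A: "Wt S (qd S) (set (path_edges (rp c))) u = Wt S (qd S) (set (path_edges (rp ?y))) u"
    if "u \<in> set (rp ?y) - {?y}" for u
  proof -
    have "u \<notin> inn c" using that cy by (auto simp: inn_def)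
    then show ?thesis unfolding pe by (intro Wt_cong) auto
  qed
  have B: "Wt S (qd S) (set (path_edges (rp ?y))) ?y = qd S (inn c) ?y * Wt S (qd S) (set (path_edges (rp c))) ?y"
    unfolding pe by (rule Wt_remove[OF finX1 inn_edge[OF c] par_in_inn nin])
  have C: "Wt S (qd S) (set (path_edges (rp c))) c = Pi c" unfolding Pi_def by (rule Wt_rp_self[OF c])
  have "P c = (\<Prod>u\<in>set (rp c). Wt S (qd S) (set (path_edges (rp c))) u)"
    unfolding P_def by (rule Pr_cells[OF rp_path[OF c(1)]])
  also have "\<dots> = Pi c * (\<Prod>u\<in>set (rp ?y). Wt S (qd S) (set (path_edges (rp c))) u)"
    using rp_snoc[OF c] cy C by simp
  also have "(\<Prod>u\<in>set (rp ?y). Wt S (qd S) (set (path_edges (rp c))) u)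
      = Wt S (qd S) (set (path_edges (rp c))) ?y * (\<Prod>u\<in>set (rp ?y) - {?y}. Wt S (qd S) (set (path_edges (rp c))) u)"
    using prod.remove[of "set (rp ?y)" ?y] x_in_rp[OF y] by simp
  also have "(\<Prod>u\<in>set (rp ?y) - {?y}. Wt S (qd S) (set (path_edges (rp c))) u) = (\<Prod>u\<in>set (rp ?y) - {?y}. Wt S (qd S) (set (path_edges (rp ?y))) u)"
    using A by (intro prod.cong) auto
  finally have 1: "P c = Pi c * (Wt S (qd S) (set (path_edges (rp c))) ?y * (\<Prod>u\<in>set (rp ?y) - {?y}. Wt S (qd S) (set (path_edges (rp ?y))) u))" .
  have "P ?y = (\<Prod>u\<in>set (rp ?y). Wt S (qd S) (set (path_edges (rp ?y))) u)"
    unfolding P_def by (rule Pr_cells[OF rp_path[OF y]])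
  also have "\<dots> = Wt S (qd S) (set (path_edges (rp ?y))) ?y * (\<Prod>u\<in>set (rp ?y) - {?y}. Wt S (qd S) (set (path_edges (rp ?y))) u)"
    using prod.remove[of "set (rp ?y)" ?y] x_in_rp[OF y] by simp
  finally have 2: "P ?y = \<dots>" .
  show ?thesis using 1 2 B by (simp add: algebra_simps)
qed

lemma det_rel: "c \<in> cells S \<Longrightarrow> c \<noteq> r \<Longrightarrow> par c \<noteq> r \<Longrightarrow>
   qd S (inn c) (par c) * sv c = sv (par c) * Wt S (qd S) {inn (par c), inn c} (par c) * Pi c"
proof -
  assume c: "c \<in> cells S" "c \<noteq> r" "par c \<noteq> r"
  show ?thesis unfolding sv_def G_step[OF c] Pi_split[OF c]
    by (simp add: power2_eq_square algebra_simps)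
qed

end

lemma Qf_upd: "Qf (S\<lparr>qd := q\<rparr>) e x = Wt S q {e} x"
  unfolding Qf_def Wt_def by simp

context central
begin

lemma Vs_cell: "x \<in> Vs S \<Longrightarrow> x \<in> cells S \<and> x \<noteq> r"
  using r_notV cells_VA by auto

lemma qs_off: "e \<in> Es S \<Longrightarrow> x \<in> e \<Longrightarrow> x \<notin> Vs S \<or> e \<noteq> inn x \<Longrightarrow> qs e x = qd S e x"
  by (auto simp: qs_def)

lemma qs_inn: "x \<in> Vs S \<Longrightarrow> qs (inn x) x = sv x - qd S (inn x) x"
  using inn_edge[of x] Vs_cell[of x] x_in_inn[of x] by (simp add: qs_def)

lemma qs_zero: "\<not> (e \<in> Es S \<and> x \<in> e) \<Longrightarrow> qs e x = 0"
  unfolding qs_def by presburger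

lemma qd_dvd_sv: "e \<in> K y \<Longrightarrow> qd S e y dvd sv y"
proof -
  assume "e \<in> K y"
  then have "qd S e y dvd Pi y" unfolding Pi_K using K_fin by (intro dvd_prodI)
  then show ?thesis unfolding sv_def by simp
qed

lemma dt_qs: "decorated_tree (S\<lparr>qd := qs\<rparr>)"
proof -
  have tr: "is_tree (cells S) (Es S)" using dtS by (simp add: decorated_tree_def)
  have arr: "qs e \<alpha> = 1" if "e \<in> Es S" "\<alpha> \<in> As S" "\<alpha> \<in> e" for e \<alpha>
  proof -
    have "\<alpha> \<notin> Vs S" using dt_facts(3) that(2) by blast
    then have "qs e \<alpha> = qd S e \<alpha>" using qs_off[OF that(1,3)] by blast
    then show ?thesis using dt_facts(5)[OF that(1,2,3)] by simp
  qed
  have g: "gcd (qs e v) (qs e' v) = 1" if v: "v \<in> Vs S" and e: "e \<in> Es S" "e' \<in> Es S" "v \<in> e" "v \<in> e'" "e \<noteq> e'" for v e e'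
  proof -
    have base: "gcd (qd S e v) (qd S e' v) = 1" using dt_facts(6)[OF v e] .
    consider (a) "e = inn v" | (b) "e' = inn v" | (c) "e \<noteq> inn v" "e' \<noteq> inn v" by blast
    then show ?thesis
    proof cases
      case a
      then have "e' \<in> K v" using e by (auto simp: K_def)
      then have "qd S e' v dvd sv v" by (rule qd_dvd_sv)
      moreover have "qs e v = sv v - qd S e v" using qs_inn[OF v] a by simp
      moreover have "qs e' v = qd S e' v" using qs_off e a by auto
      ultimately show ?thesis using gcd_sub_dvd base by simp
    next
      case b
      then have "e \<in> K v" using e by (auto simp: K_def)
      then have "qd S e v dvd sv v" by (rule qd_dvd_sv)
      moreover have "qs e' v = sv v - qd S e' v" using qs_inn[OF v] b by simp
      moreover have "qs e v = qd S e v" using qs_off e b by auto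
      ultimately show ?thesis using gcd_sub_dvd[of "qd S e v" "sv v" "qd S e' v"] base by (simp add: gcd.commute)
    next
      case c
      then show ?thesis using qs_off e base by auto
    qed
  qed
  show ?thesis unfolding decorated_tree_def using dt_facts tr arr g by (simp add: cells_def)
qed

lemma edge_r_inn: "v \<in> Vs S \<Longrightarrow> {r,v} \<in> Es S \<Longrightarrow> inn v = {r,v} \<and> par v = r"
proof -
  assume v: "v \<in> Vs S" and e: "{r,v} \<in> Es S"
  have vc: "v \<in> cells S" "v \<noteq> r" using Vs_cell[OF v] by auto
  have "{r,v} = inn v"
  proof (rule ccontr)
    assume ne: "{r,v} \<noteq> inn v"
    have vin: "v \<in> {r,v}" by simp
    have nn: "v = r \<or> {r,v} \<noteq> inn v" using ne by simp
    obtain c where c: "{r,v} = {v,c}" "c \<noteq> r" "c \<noteq> v" using child[OF e vin nn] by metis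
    then show False by (auto simp: doubleton_eq_iff)
  qed
  moreover have "par v = r" using calculation vc par_neq[OF vc] by (auto simp: inn_def doubleton_eq_iff)
  ultimately show ?thesis by simp
qed

lemma det_case:
  assumes c: "c \<in> Vs S" and z: "par c \<in> Vs S"
  shows "detf (S\<lparr>qd := qs\<rparr>) (par c) c = - detf S (par c) c"
proof -
  let ?z = "par c" and ?e = "inn c"
  have cc: "c \<in> cells S" "c \<noteq> r" using Vs_cell[OF c] by auto
  have zc: "?z \<in> cells S" "?z \<noteq> r" using Vs_cell[OF z] by auto
  have ee: "{?z, c} = ?e" by (simp add: inn_def)
  have eE: "?e \<in> Es S" using inn_edge[OF cc] .
  have ez: "?e \<noteq> inn ?z" using inn_in_K_par[OF cc zc(2)] by (simp add: K_def)
  have q1: "qs ?e ?z = qd S ?e ?z" using qs_off[OF eE par_in_inn] ez by simp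
  have q2: "qs ?e c = sv c - qd S ?e c" using qs_inn[OF c] .
  have Q1: "Wt S qs {?e} c = Pi c"
    unfolding Pi_def by (rule Wt_q_cong) (use qs_off in auto)
  have Q2: "Wt S qs {?e} ?z = qs (inn ?z) ?z * Wt S qs {inn ?z, ?e} ?z"
    using Wt_remove[OF finX1 inn_edge[OF zc] x_in_inn, of "{?e}" qs] ez by (simp add: insert_commute)
  have Q3: "Wt S qs {inn ?z, ?e} ?z = Wt S (qd S) {inn ?z, ?e} ?z"
    by (rule Wt_q_cong) (use qs_off in auto)
  have Q4: "Wt S (qd S) {?e} ?z = qd S (inn ?z) ?z * Wt S (qd S) {inn ?z, ?e} ?z"
    using Wt_remove[OF finX1 inn_edge[OF zc] x_in_inn, of "{?e}" "qd S"] ez by (simp add: insert_commute)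
  have Q5: "Wt S (qd S) {?e} c = Pi c" by (simp add: Pi_def)
  have dr: "qd S ?e ?z * sv c = sv ?z * Wt S (qd S) {inn ?z, ?e} ?z * Pi c" using det_rel[OF cc zc(2)] .
  have qz: "qs (inn ?z) ?z = sv ?z - qd S (inn ?z) ?z" using qs_inn[OF z] .
  have "detf (S\<lparr>qd := qs\<rparr>) ?z c = qs ?e ?z * qs ?e c - Wt S qs {?e} ?z * Wt S qs {?e} c"
    unfolding detf_def Qf_upd ee by simp
  also have "\<dots> = qd S ?e ?z * (sv c - qd S ?e c) - (sv ?z - qd S (inn ?z) ?z) * Wt S (qd S) {inn ?z, ?e} ?z * Pi c"
    using q1 q2 Q1 Q2 Q3 qz by simp
  also have "\<dots> = - (qd S ?e ?z * qd S ?e c - qd S (inn ?z) ?z * Wt S (qd S) {inn ?z, ?e} ?z * Pi c)"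
    using dr by (simp add: algebra_simps)
  also have "\<dots> = - detf S ?z c"
    unfolding detf_def Qf_Wt ee Q4 Q5 by (simp add: algebra_simps)
  finally show ?thesis .
qed

lemma det_all: "u \<in> Vs S \<Longrightarrow> v \<in> Vs S \<Longrightarrow> {u,v} \<in> Es S \<Longrightarrow> detf (S\<lparr>qd := qs\<rparr>) u v = - detf S u v"
proof -
  assume u: "u \<in> Vs S" and v: "v \<in> Vs S" and e: "{u,v} \<in> Es S"
  have uv: "u \<noteq> v" using edge_neq[OF e] .
  obtain c where c: "c \<in> cells S" "c \<noteq> r" "inn c = {u,v}" using inn_surj[OF e] by blast
  have "c \<in> {u,v}" using c(3) x_in_inn[of c] by simp
  then show ?thesis
  proof
    assume cu: "c = u"
    then have "par u = v" using c(3) uv by (auto simp: inn_def doubleton_eq_iff)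
    then show ?thesis using det_case[OF u] v detf_sym by metis
  next
    assume "c \<in> {v}"
    then have cv: "c = v" by simp
    then have "par v = u" using c(3) uv by (auto simp: inn_def doubleton_eq_iff)
    then show ?thesis using det_case[OF v] u by metis
  qed
qed

lemma star_cond_qs: "star_cond S r qs"
proof -
  have c5: "qs {r, v} v = Qf S {r, v} v - qd S {r, v} v" if v: "v \<in> Vs S" "{r,v} \<in> Es S" for v
  proof -
    have iv: "inn v = {r,v}" "par v = r" using edge_r_inn[OF v] by auto
    have vc: "v \<in> cells S" "v \<noteq> r" using Vs_cell[OF v(1)] by auto
    have "sv v = Pi v" using G_top[OF vc iv(2)] by (simp add: sv_def)
    then show ?thesis using qs_inn[OF v(1)] iv Pi_Qf by simp
  qed
  have c4: "qs e v = qd S e v" if "v \<in> Vs S - {r}" "e \<in> Es S" "v \<in> e" "e \<notin> set (path_edges (gam S r v))" for v e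
  proof -
    have "inn v \<in> set (path_edges (gam S r v))" using PE_rp[of v] Vs_cell[of v] that(1) gam_gp by simp
    then show ?thesis using qs_off that by auto
  qed
  show ?thesis unfolding star_cond_def
    using dt_qs qs_zero qs_off r_notV c4 c5 det_all by auto
qed

lemma star_uniq: "star_cond S r q' \<Longrightarrow> q' = qs"
proof -
  assume sc: "star_cond S r q'"
  let ?S2 = "S\<lparr>qd := q'\<rparr>"
  have dt2: "decorated_tree ?S2" and c2: "\<And>e x. \<not> (e \<in> Es S \<and> x \<in> e) \<Longrightarrow> q' e x = 0"
    and c3: "\<And>e. e \<in> Es S \<Longrightarrow> r \<in> e \<Longrightarrow> q' e r = qd S e r"
    and c4: "\<And>v e. v \<in> Vs S - {r} \<Longrightarrow> e \<in> Es S \<Longrightarrow> v \<in> e \<Longrightarrow> e \<notin> set (path_edges (gam S r v)) \<Longrightarrow> q' e v = qd S e v"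
    and c5: "\<And>v. v \<in> Vs S \<Longrightarrow> {r, v} \<in> Es S \<Longrightarrow> q' {r, v} v = Qf S {r, v} v - qd S {r, v} v"
    and c6: "\<And>u v. u \<in> Vs S - {r} \<Longrightarrow> v \<in> Vs S - {r} \<Longrightarrow> {u, v} \<in> Es S \<Longrightarrow> detf ?S2 u v = - detf S u v"
    using sc unfolding star_cond_def by auto
  have arr2: "q' e \<alpha> = 1" if "e \<in> Es S" "\<alpha> \<in> As S" "\<alpha> \<in> e" for e \<alpha>
    using dt2 that unfolding decorated_tree_def by auto
  have c4': "q' e v = qd S e v" if "v \<in> Vs S" "e \<in> Es S" "v \<in> e" "e \<noteq> inn v" for v e
  proof -
    have vc: "v \<in> cells S" "v \<noteq> r" using Vs_cell[OF that(1)] by auto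
    have "e \<notin> set (path_edges (rp v))"
    proof
      assume "e \<in> set (path_edges (rp v))"
      then have "e \<in> {e\<in>Es S. v \<in> e} \<inter> set (path_edges (rp v))" using that by simp
      then show False using PE_rp_at[OF vc] that(4) by simp
    qed
    then have "e \<notin> set (path_edges (gam S r v))" by (simp add: gam_gp)
    then show ?thesis using c4 that vc by auto
  qed
  have main: "\<forall>x. length (rp x) = n \<longrightarrow> x \<in> cells S \<longrightarrow> (\<forall>e. e \<in> Es S \<and> x \<in> e \<longrightarrow> q' e x = qs e x)" for n
  proof (induct n rule: less_induct)
    case (less n)
    show ?case
    proof (intro allI impI, elim conjE)
      fix x e assume len: "length (rp x) = n" and xc: "x \<in> cells S" and eE: "e \<in> Es S" and xe: "x \<in> e"
      show "q' e x = qs e x"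
      proof (cases "x = r")
        case True then show ?thesis using c3 eE xe qs_off r_notV by auto
      next
        case xr: False
        show ?thesis
        proof (cases "x \<in> Vs S")
          case False
          then have "x \<in> As S" using xc cells_VA by auto
          then show ?thesis using arr2 dt_facts(5) eE xe qs_off False by auto
        next
          case xV: True
          show ?thesis
          proof (cases "e = inn x")
            case False then show ?thesis using c4' xV eE xe qs_off by auto
          next
            case eI: True
            let ?z = "par x"
            show ?thesis
            proof (cases "?z = r")
              case True
              then have ir: "inn x = {r,x}" by (simp add: inn_def)
              have "sv x = Pi x" using G_top[OF xc xr True] by (simp add: sv_def)
              then show ?thesis using c5[OF xV] eI ir eE qs_inn[OF xV] Pi_Qf by simp
            next
              case zr: False
              have zV: "?z \<in> Vs S" using par_V[OF xc xr zr] .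
              have zc: "?z \<in> cells S" using par_cell[OF xc xr] .
              have ee: "{?z, x} = e" using eI by (simp add: inn_def)
              have lz: "length (rp ?z) < n" using rp_snoc[OF xc xr] len by simp
              have IH: "q' (inn ?z) ?z = qs (inn ?z) ?z"
                using less[OF lz] zc inn_edge[OF zc zr] x_in_inn by blast
              have ez: "e \<noteq> inn ?z" using inn_in_K_par[OF xc xr zr] eI by (simp add: K_def)
              have ezE: "e \<in> K ?z" using inn_in_K_par[OF xc xr zr] eI by simp
              have q1: "q' e ?z = qd S e ?z" using c4'[OF zV eE] ee ez by auto
              have Q1: "Wt S q' {e} x = Wt S qs {e} x"
                by (rule Wt_q_cong) (use c4' xV eI qs_off in auto)
              have Q2: "Wt S q' {e} ?z = Wt S qs {e} ?z"
              proof (rule Wt_q_cong)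
                fix e' assume e': "e' \<in> Es S" "?z \<in> e'" "e' \<notin> {e}"
                show "q' e' ?z = qs e' ?z"
                proof (cases "e' = inn ?z")
                  case True then show ?thesis using IH by simp
                next
                  case False then show ?thesis using c4'[OF zV e'(1,2)] qs_off[OF e'(1,2)] by simp
                qed
              qed
              have zin: "?z \<in> e" using eI par_in_inn by simp
              have d2: "detf ?S2 ?z x = - detf S ?z x" using c6 zV xV zr xr eE ee by auto
              have d1: "detf (S\<lparr>qd := qs\<rparr>) ?z x = - detf S ?z x" using det_case[OF xV zV] .
              have "qd S e ?z * q' e x - Wt S qs {e} ?z * Wt S qs {e} x = qd S e ?z * qs e x - Wt S qs {e} ?z * Wt S qs {e} x"
              proof -
                have e2: "detf ?S2 ?z x = q' e ?z * q' e x - Wt S q' {e} ?z * Wt S q' {e} x"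
                  unfolding detf_def Qf_upd ee by simp
                have e1: "detf (S\<lparr>qd:=qs\<rparr>) ?z x = qs e ?z * qs e x - Wt S qs {e} ?z * Wt S qs {e} x"
                  unfolding detf_def Qf_upd ee by simp
                have qsz: "qs e ?z = qd S e ?z" using qs_off[OF eE zin] ez by simp
                show ?thesis using d1 d2 e1 e2 q1 Q1 Q2 qsz by simp
              qed
              then have "qd S e ?z * q' e x = qd S e ?z * qs e x" by simp
              moreover have "qd S e ?z \<ge> 1" using cenK[OF zV] ezE by blast
              ultimately show ?thesis by simp
            qed
          qed
        qed
      qed
    qed
  qed
  show "q' = qs"
  proof (intro ext)
    fix e x
    show "q' e x = qs e x"
    proof (cases "e \<in> Es S \<and> x \<in> e")
      case True
      then have "x \<in> cells S" using edge_sub by blast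
      then show ?thesis using main True by blast
    next
      case False then show ?thesis using c2 qs_zero by simp
    qed
  qed
qed

lemma star_eq: "star S r = S\<lparr>qd := qs\<rparr>"
  unfolding star_def using the_equality[of "star_cond S r" qs, OF star_cond_qs star_uniq] by simp

end

lemma path_edge_at: "2 \<le> length p \<Longrightarrow> u \<in> set p \<Longrightarrow> \<exists>e\<in>set (path_edges p). u \<in> e"
proof (induct p rule: induct_list012)
  case (3 x y zs)
  show ?case
  proof (cases "u = x \<or> u = y")
    case True then show ?thesis by auto
  next
    case False
    then have u: "u \<in> set zs" using 3(4) by auto
    then have "2 \<le> length (y # zs)" by (cases zs) auto
    then obtain e where "e \<in> set (path_edges (y # zs))" "u \<in> e" using 3(2) u by auto
    then show ?thesis by auto
  qed
qed auto

context central
begin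

definition Xp where "Xp p = (\<Prod>u\<in>set p. Wt S (qd S) (insert (inn u) (set (path_edges p))) u)"

lemma Pr_star_rp: "y \<in> cells S \<Longrightarrow> Pr (S\<lparr>qd := qs\<rparr>) (rp y) = P y"
proof -
  assume y: "y \<in> cells S"
  have "Pr (S\<lparr>qd := qs\<rparr>) (rp y) = (\<Prod>u\<in>set (rp y). Wt S qs (set (path_edges (rp y))) u)"
    by (rule Pr_cells_upd[OF rp_path[OF y]])
  also have "\<dots> = (\<Prod>u\<in>set (rp y). Wt S (qd S) (set (path_edges (rp y))) u)"
  proof (rule prod.cong[OF refl], rule Wt_q_cong)
    fix u e assume u: "u \<in> set (rp y)" and e: "e \<in> Es S" "u \<in> e" "e \<notin> set (path_edges (rp y))"
    have "u \<notin> Vs S \<or> e \<noteq> inn u"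
    proof (cases "u \<in> Vs S")
      case True
      then have "u \<noteq> r" using r_notV by blast
      then have "inn u \<in> set (path_edges (rp y))" using rp_prefix_inn[OF y u] by blast
      then show ?thesis using e by auto
    qed simp
    then show "qs e u = qd S e u" using qs_off e by blast
  qed
  also have "\<dots> = P y" unfolding P_def by (rule Pr_cells[OF rp_path[OF y], symmetric])
  finally show ?thesis .
qed

lemma r_notin: "y \<in> cells S \<Longrightarrow> y \<noteq> r \<Longrightarrow> z \<in> cells S \<Longrightarrow> z \<noteq> r \<Longrightarrow> r \<notin> set (gp y z)"
proof
  assume y: "y \<in> cells S" "y \<noteq> r" and z: "z \<in> cells S" "z \<noteq> r" and rin: "r \<in> set (gp y z)"
  obtain xs ys where p: "gp y z = xs @ r # ys" using split_list[OF rin] by blast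
  have xs: "xs \<noteq> []" using gp_hd[OF y(1) z(1)] p y(2) by (cases xs) auto
  have ys: "ys \<noteq> []" using gp_last[OF y(1) z(1)] p z(2) by (cases ys) auto
  obtain y1 ys1 where ys1: "ys = y1 # ys1" using ys by (cases ys) auto
  have pe: "path_edges (gp y z) = path_edges xs @ {last xs, r} # {r, y1} # path_edges ys"
    using p xs ys1 by (simp add: path_edges_append)
  have d: "distinct (path_edges (gp y z))" and sub: "set (path_edges (gp y z)) \<subseteq> Es S"
    using gp_path[OF y(1) z(1)] by (auto simp: is_path_alt)
  have "{last xs, r} \<in> Es S" "{r, y1} \<in> Es S" using sub pe by auto
  then have "{last xs, r} = {r, y1}" using edges_r by blast
  then show False using d pe by simp
qed

lemma top_card:
  assumes p: "is_path (cells S) (Es S) p" and rn: "r \<notin> set p"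
  shows "card {m\<in>set p. inn m \<notin> set (path_edges p)} = 1"
proof -
  let ?C = "set p" and ?E = "set (path_edges p)"
  let ?A = "{m\<in>?C. inn m \<in> ?E}"
  have Cc: "?C \<subseteq> cells S" using p by (auto simp: is_path_alt)
  have img: "inn ` ?A = ?E"
  proof
    show "inn ` ?A \<subseteq> ?E" by auto
  next
    show "?E \<subseteq> inn ` ?A"
    proof
      fix e assume e: "e \<in> ?E"
      then have eE: "e \<in> Es S" using p by (auto simp: is_path_alt)
      obtain c where c: "c \<in> cells S" "c \<noteq> r" "inn c = e" using inn_surj[OF eE] by blast
      have "c \<in> ?C" using path_edges_subset[OF e] c(3) x_in_inn[of c] by auto
      then show "e \<in> inn ` ?A" using c e by auto
    qed
  qed
  have inj: "inj_on inn ?A"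
  proof (rule inj_onI)
    fix x y assume "x \<in> ?A" "y \<in> ?A" "inn x = inn y"
    then show "x = y" using inn_inj Cc rn by blast
  qed
  have cA: "card ?A = card ?E" using card_image[OF inj] img by simp
  have dE: "distinct (path_edges p)" using p by (simp add: is_path_alt)
  have cE: "card ?E = length p - 1" using distinct_card[OF dE] length_path_edges by simp
  have cC: "card ?C = length p" using distinct_card[OF path_distinct[OF p]] .
  have ne: "p \<noteq> []" using p by (simp add: is_path_alt)
  have "{m\<in>?C. inn m \<notin> ?E} = ?C - ?A" by auto
  moreover have "card (?C - ?A) = card ?C - card ?A" by (rule card_Diff_subset) auto
  ultimately show ?thesis using cA cE cC ne by (cases p) auto
qed

lemma top_ex: "is_path (cells S) (Es S) p \<Longrightarrow> r \<notin> set p \<Longrightarrow> \<exists>m. m \<in> set p \<and> inn m \<notin> set (path_edges p)"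
  using top_card[of p] by (metis (mono_tags, lifting) card_1_singletonE mem_Collect_eq singletonI)

lemma top_uniq: "is_path (cells S) (Es S) p \<Longrightarrow> r \<notin> set p \<Longrightarrow> m1 \<in> set p \<Longrightarrow> inn m1 \<notin> set (path_edges p)
   \<Longrightarrow> m2 \<in> set p \<Longrightarrow> inn m2 \<notin> set (path_edges p) \<Longrightarrow> m1 = m2"
  using top_card[of p] by (metis (mono_tags, lifting) card_1_singletonE mem_Collect_eq singletonD)

lemma prod_top:
  assumes p: "is_path (cells S) (Es S) p" and rn: "r \<notin> set p" and m: "m \<in> set p" "inn m \<notin> set (path_edges p)"
  shows "(\<Prod>u\<in>set p. Wt S q (set (path_edges p)) u) = q (inn m) m * (\<Prod>u\<in>set p. Wt S q (insert (inn u) (set (path_edges p))) u)"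
proof -
  let ?E = "set (path_edges p)"
  have Cc: "set p \<subseteq> cells S" using p by (auto simp: is_path_alt)
  have mc: "m \<in> cells S" "m \<noteq> r" using m Cc rn by auto
  have oth: "inn u \<in> ?E" if "u \<in> set p" "u \<noteq> m" for u
    using top_uniq[OF p rn _ _ m] that by blast
  have "(\<Prod>u\<in>set p. Wt S q ?E u) = Wt S q ?E m * (\<Prod>u\<in>set p - {m}. Wt S q ?E u)"
    using prod.remove[of "set p" m] m by simp
  also have "Wt S q ?E m = q (inn m) m * Wt S q (insert (inn m) ?E) m"
    by (rule Wt_remove[OF finX1 inn_edge[OF mc] x_in_inn m(2)])
  also have "(\<Prod>u\<in>set p - {m}. Wt S q ?E u) = (\<Prod>u\<in>set p - {m}. Wt S q (insert (inn u) ?E) u)"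
    by (rule prod.cong) (use oth in \<open>auto simp: insert_absorb\<close>)
  also have "q (inn m) m * Wt S q (insert (inn m) ?E) m * (\<Prod>u\<in>set p - {m}. Wt S q (insert (inn u) ?E) u)
     = q (inn m) m * (\<Prod>u\<in>set p. Wt S q (insert (inn u) ?E) u)"
    using prod.remove[of "set p" m "\<lambda>u. Wt S q (insert (inn u) ?E) u"] m by simp
  finally show ?thesis .
qed

lemma Xp_qs: "set p \<subseteq> cells S - {r} \<Longrightarrow>
   (\<Prod>u\<in>set p. Wt S qs (insert (inn u) (set (path_edges p))) u) = Xp p"
  unfolding Xp_def by (rule prod.cong[OF refl], rule Wt_q_cong) (use qs_off in auto)

end

context central
begin

lemma claimB:
  assumes y: "y \<in> cells S" "y \<noteq> r"
  shows "z \<in> cells S \<Longrightarrow> z \<noteq> r \<Longrightarrow> m \<in> set (gp y z) \<Longrightarrow> inn m \<notin> set (path_edges (gp y z)) \<Longrightarrow> m \<in> Vs S \<Longrightarrow>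
     sv m * Xp (gp y z) = P y * P z"
proof (induct "length (rp z)" arbitrary: z m rule: less_induct)
  case (less z m)
  note z = less(2,3)
  let ?p = "gp y z"
  have pp: "is_path (cells S) (Es S) ?p" using gp_path[OF y(1) z(1)] .
  have rn: "r \<notin> set ?p" using r_notin[OF y z] .
  have zin: "z \<in> set ?p" using gp_last[OF y(1) z(1)] gp_ne[OF y(1) z(1)] last_in_set by metis
  show ?case
  proof (cases "par z = r")
    case True
    have iz: "inn z = {z, r}" using True by (simp add: inn_def insert_commute)
    have izE: "inn z \<in> Es S" using inn_edge[OF z] .
    have ztop: "inn z \<notin> set (path_edges ?p)" using path_edges_subset rn iz by blast
    have mz: "m = z" using top_uniq[OF pp rn less(4,5) zin ztop] .
    have g1: "gp y r = ?p @ [r]" using gp_snoc[OF y(1) z(1), of r] izE iz rn by simp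
    have pr: "is_path (cells S) (Es S) (?p @ [r])" using gp_path[OF y(1) r_cell] g1 by simp
    have "P y = Pr S (rev (gp y r))" unfolding P_def using gp_rev[OF y(1) r_cell] by simp
    also have "\<dots> = Pr S (?p @ [r])" using Pr_rev[OF pr] g1 by simp
    also have "\<dots> = (\<Prod>u\<in>set (?p @ [r]). Wt S (qd S) (set (path_edges (?p @ [r]))) u)"
      by (rule Pr_cells[OF pr])
    also have "set (path_edges (?p @ [r])) = insert (inn z) (set (path_edges ?p))"
      using gp_ne[OF y(1) z(1)] gp_last[OF y(1) z(1)] iz by (simp add: path_edges_snoc)
    also have "(\<Prod>u\<in>set (?p @ [r]). Wt S (qd S) (insert (inn z) (set (path_edges ?p))) u)
        = Wt S (qd S) (insert (inn z) (set (path_edges ?p))) r * (\<Prod>u\<in>set ?p. Wt S (qd S) (insert (inn z) (set (path_edges ?p))) u)"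
      using rn by simp
    also have "Wt S (qd S) (insert (inn z) (set (path_edges ?p))) r = 1"
      by (rule Wt_all) (use par_r_edges[OF z True] in auto)
    also have "(\<Prod>u\<in>set ?p. Wt S (qd S) (insert (inn z) (set (path_edges ?p))) u) = Xp ?p"
      unfolding Xp_def
    proof (rule prod.cong[OF refl])
      fix u assume u: "u \<in> set ?p"
      show "Wt S (qd S) (insert (inn z) (set (path_edges ?p))) u = Wt S (qd S) (insert (inn u) (set (path_edges ?p))) u"
      proof (cases "u = z")
        case False
        have "inn u \<in> set (path_edges ?p)" using top_uniq[OF pp rn u _ zin ztop] False by blast
        moreover have "u \<notin> inn z" using False u rn iz by auto
        ultimately show ?thesis by (intro Wt_cong) (auto simp: insert_absorb)
      qed simp
    qed
    finally have Py: "P y = Xp ?p" by simp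
    have Pz: "P z = Pi z" using P_split[OF z] G_top[OF z True] by simp
    have svz: "sv z = Pi z" using G_top[OF z True] by (simp add: sv_def)
    show ?thesis using Py Pz svz mz by simp
  next
    case zr: False
    let ?z = "par z"
    have z'c: "?z \<in> cells S" using par_cell[OF z] .
    have z'V: "?z \<in> Vs S" using par_V[OF z zr] .
    have lz: "length (rp ?z) < length (rp z)" using rp_snoc[OF z] by simp
    have IH: "\<And>m'. m' \<in> set (gp y ?z) \<Longrightarrow> inn m' \<notin> set (path_edges (gp y ?z)) \<Longrightarrow> m' \<in> Vs S \<Longrightarrow>
        sv m' * Xp (gp y ?z) = P y * P ?z"
      using less(1)[OF lz z'c zr] by blast
    have izK: "inn z \<in> K ?z" using inn_in_K_par[OF z zr] .
    have cge: "qd S (inn z) ?z \<ge> 1" using cenK[OF z'V] izK by blast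
    have izE: "inn z \<in> Es S" using inn_edge[OF z] .
    have iz: "inn z = {?z, z}" by (simp add: inn_def)
    have iz_ne: "inn z \<noteq> inn ?z" using izK by (simp add: K_def)
    have Pst: "qd S (inn z) ?z * P z = P ?z * Pi z" using P_step[OF z] .
    let ?p' = "gp y ?z"
    have pp': "is_path (cells S) (Es S) ?p'" using gp_path[OF y(1) z'c] .
    have rn': "r \<notin> set ?p'" using r_notin[OF y z'c zr] .
    have z'in: "?z \<in> set ?p'" using gp_last[OF y(1) z'c] gp_ne[OF y(1) z'c] last_in_set by metis
    show ?thesis
    proof (cases "z \<in> set ?p'")
      case False
      have g: "?p = ?p' @ [z]" using gp_snoc[OF y(1) z'c, of z] izE iz False by simp
      have E: "set (path_edges ?p) = insert (inn z) (set (path_edges ?p'))"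
        using g gp_ne[OF y(1) z'c] gp_last[OF y(1) z'c] iz by (simp add: path_edges_snoc)
      have mz: "m \<noteq> z" using less(5) E by auto
      have m': "m \<in> set ?p'" "inn m \<notin> set (path_edges ?p')" using less(4,5) mz g E by auto
      have ih: "sv m * Xp ?p' = P y * P ?z" using IH[OF m' less(6)] .
      have zn: "\<forall>e\<in>set (path_edges ?p'). z \<notin> e" using False path_edges_subset by blast
      have A: "Wt S (qd S) (insert (inn z) (set (path_edges ?p))) z = Pi z"
        unfolding Pi_def E by (rule Wt_cong) (use zn in auto)
      have B: "Wt S (qd S) (insert (inn u) (set (path_edges ?p))) u = Wt S (qd S) (insert (inn u) (set (path_edges ?p'))) u"
        if "u \<in> set ?p'" "u \<noteq> ?z" for u
      proof -
        have "u \<notin> inn z" using that False iz by auto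
        then show ?thesis unfolding E by (intro Wt_cong) auto
      qed
      have nin: "inn z \<notin> insert (inn ?z) (set (path_edges ?p'))" using iz_ne zn x_in_inn[of z] by auto
      have C: "Wt S (qd S) (insert (inn ?z) (set (path_edges ?p'))) ?z =
          qd S (inn z) ?z * Wt S (qd S) (insert (inn ?z) (set (path_edges ?p))) ?z"
        unfolding E using Wt_remove[OF finX1 izE par_in_inn nin] by (simp add: insert_commute)
      have X1: "Xp ?p = Pi z * (Wt S (qd S) (insert (inn ?z) (set (path_edges ?p))) ?z *
           (\<Prod>u\<in>set ?p' - {?z}. Wt S (qd S) (insert (inn u) (set (path_edges ?p'))) u))"
      proof -
        have "Xp ?p = Wt S (qd S) (insert (inn z) (set (path_edges ?p))) z *
           (\<Prod>u\<in>set ?p'. Wt S (qd S) (insert (inn u) (set (path_edges ?p))) u)"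
          unfolding Xp_def using g False by simp
        also have "(\<Prod>u\<in>set ?p'. Wt S (qd S) (insert (inn u) (set (path_edges ?p))) u) =
            Wt S (qd S) (insert (inn ?z) (set (path_edges ?p))) ?z *
            (\<Prod>u\<in>set ?p' - {?z}. Wt S (qd S) (insert (inn u) (set (path_edges ?p))) u)"
          using prod.remove[of "set ?p'" ?z] z'in by simp
        also have "(\<Prod>u\<in>set ?p' - {?z}. Wt S (qd S) (insert (inn u) (set (path_edges ?p))) u) =
            (\<Prod>u\<in>set ?p' - {?z}. Wt S (qd S) (insert (inn u) (set (path_edges ?p'))) u)"
          using B by (intro prod.cong) auto
        finally show ?thesis using A by simp
      qed
      have X2: "Xp ?p' = qd S (inn z) ?z * Wt S (qd S) (insert (inn ?z) (set (path_edges ?p))) ?z *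
           (\<Prod>u\<in>set ?p' - {?z}. Wt S (qd S) (insert (inn u) (set (path_edges ?p'))) u)"
      proof -
        have "Xp ?p' = Wt S (qd S) (insert (inn ?z) (set (path_edges ?p'))) ?z *
           (\<Prod>u\<in>set ?p' - {?z}. Wt S (qd S) (insert (inn u) (set (path_edges ?p'))) u)"
          unfolding Xp_def using prod.remove[of "set ?p'" ?z "\<lambda>u. Wt S (qd S) (insert (inn u) (set (path_edges ?p'))) u"] z'in by simp
        then show ?thesis using C by (simp add: mult.assoc)
      qed
      have "qd S (inn z) ?z * (sv m * Xp ?p) = Pi z * (sv m * Xp ?p')"
        using X1 X2 by (simp add: algebra_simps)
      also have "\<dots> = qd S (inn z) ?z * (P y * P z)" using ih Pst by (simp add: algebra_simps)
      finally show ?thesis using cge by simp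
    next
      case True
      obtain xs ys where p'd: "?p' = xs @ z # ys" using split_list[OF True] by blast
      have gz: "?p = xs @ [z]" using gp_prefix[OF y(1) z'c p'd] .
      have dd: "distinct ?p'" using path_distinct[OF pp'] .
      have z'n: "?z \<notin> set ?p"
      proof
        assume a: "?z \<in> set ?p"
        have zz: "?z \<noteq> z" using par_neq[OF z] .
        then have "?z \<in> set xs" using a gz by simp
        moreover have "ys \<noteq> []" using gp_last[OF y(1) z'c] p'd zz by (cases ys) auto
        then have "?z \<in> set ys"
        proof -
          assume yne: "ys \<noteq> []"
          have "last ?p' = last ys" using p'd yne by simp
          then have "?z = last ys" using gp_last[OF y(1) z'c] by simp
          then show ?thesis using yne by simp
        qed
        ultimately show False using dd p'd by auto
      qed
      have izE': "{z, ?z} \<in> Es S" using izE iz by (simp add: insert_commute)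
      have g: "?p' = ?p @ [?z]" using gp_snoc[OF y(1) z(1), of ?z] izE' z'n by simp
      have E: "set (path_edges ?p') = insert (inn z) (set (path_edges ?p))"
        using g gp_ne[OF y(1) z(1)] gp_last[OF y(1) z(1)] iz by (simp add: path_edges_snoc insert_commute)
      have zn: "\<forall>e\<in>set (path_edges ?p). ?z \<notin> e" using z'n path_edges_subset by blast
      have ztop: "inn z \<notin> set (path_edges ?p)" using zn par_in_inn by blast
      have mz: "m = z" using top_uniq[OF pp rn less(4,5) zin ztop] .
      have z'top: "inn ?z \<notin> set (path_edges ?p')" using E iz_ne zn x_in_inn[of ?z] by auto
      have ih: "sv ?z * Xp ?p' = P y * P ?z" using IH[OF z'in z'top z'V] .
      let ?R = "Wt S (qd S) {inn ?z, inn z} ?z"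
      have A: "Wt S (qd S) (insert (inn ?z) (set (path_edges ?p'))) ?z = ?R"
        unfolding E by (rule Wt_cong) (use zn in auto)
      have B: "Wt S (qd S) (insert (inn u) (set (path_edges ?p'))) u = Wt S (qd S) (insert (inn u) (set (path_edges ?p))) u"
        if "u \<in> set ?p" for u
      proof (cases "u = z")
        case True then show ?thesis unfolding E by simp
      next
        case False
        have "u \<notin> inn z" using that False z'n iz by auto
        then show ?thesis unfolding E by (intro Wt_cong) auto
      qed
      have X: "Xp ?p' = ?R * Xp ?p"
      proof -
        have "Xp ?p' = Wt S (qd S) (insert (inn ?z) (set (path_edges ?p'))) ?z *
            (\<Prod>u\<in>set ?p. Wt S (qd S) (insert (inn u) (set (path_edges ?p'))) u)"
          unfolding Xp_def using g z'n by simp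
        also have "(\<Prod>u\<in>set ?p. Wt S (qd S) (insert (inn u) (set (path_edges ?p'))) u) = Xp ?p"
          unfolding Xp_def using B by (intro prod.cong) auto
        finally show ?thesis using A by simp
      qed
      have dr: "qd S (inn z) ?z * sv z = sv ?z * ?R * Pi z" using det_rel[OF z zr] .
      have "qd S (inn z) ?z * (sv z * Xp ?p) = sv ?z * Xp ?p' * Pi z"
        using dr X by (simp add: algebra_simps)
      also have "\<dots> = qd S (inn z) ?z * (P y * P z)" using ih Pst by (simp add: algebra_simps)
      finally show ?thesis using cge mz by simp
    qed
  qed
qed

end

context central
begin

lemma pair_sum:
  assumes y: "y \<in> cells S" "y \<noteq> r" and a: "\<alpha> \<in> cells S" "\<alpha> \<noteq> r" and ya: "y \<noteq> \<alpha>"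
  shows "Pr S (gam S y \<alpha>) + Pr (star S r) (gam S y \<alpha>) = P y * P \<alpha>"
proof -
  let ?p = "gp y \<alpha>"
  have pp: "is_path (cells S) (Es S) ?p" using gp_path[OF y(1) a(1)] .
  have rn: "r \<notin> set ?p" using r_notin[OF y a] .
  obtain m where m: "m \<in> set ?p" "inn m \<notin> set (path_edges ?p)" using top_ex[OF pp rn] by blast
  have sp: "set ?p \<subseteq> cells S" using pp by (auto simp: is_path_alt)
  have mc: "m \<in> cells S" "m \<noteq> r" using m sp rn by auto
  have mV: "m \<in> Vs S"
  proof (rule ccontr)
    assume "m \<notin> Vs S"
    then have mA: "m \<in> As S" using mc cells_VA by auto
    have "length ?p \<noteq> 0" using gp_ne[OF y(1) a(1)] by simp
    moreover have "length ?p \<noteq> 1"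
    proof
      assume "length ?p = 1"
      then obtain x where "?p = [x]" by (cases ?p) auto
      then show False using gp_hd[OF y(1) a(1)] gp_last[OF y(1) a(1)] ya by simp
    qed
    ultimately have "2 \<le> length ?p" by linarith
    then obtain e where e: "e \<in> set (path_edges ?p)" "m \<in> e" using path_edge_at[OF _ m(1)] by blast
    have "e \<in> Es S" using e pp by (auto simp: is_path_alt)
    then have "e \<in> K m" using e m(2) by (auto simp: K_def)
    then show False using K_arrow[OF mA mc(2)] by simp
  qed
  have sp': "set ?p \<subseteq> cells S - {r}" using sp rn by auto
  have 1: "Pr S ?p = qd S (inn m) m * Xp ?p"
    unfolding Pr_cells[OF pp] Xp_def by (rule prod_top[OF pp rn m])
  have 2: "Pr (S\<lparr>qd := qs\<rparr>) ?p = qs (inn m) m * Xp ?p"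
    unfolding Pr_cells_upd[OF pp] prod_top[OF pp rn m] Xp_qs[OF sp'] ..
  have 3: "qs (inn m) m = sv m - qd S (inn m) m" using qs_inn[OF mV] .
  have 4: "sv m * Xp ?p = P y * P \<alpha>" using claimB[OF y a m mV] .
  show ?thesis unfolding gam_gp star_eq using 1 2 3 4 by (simp add: algebra_simps)
qed

lemma top_child: "\<exists>w. {c\<in>cells S - {r}. par c = r} = {w} \<and> G w = 1"
proof -
  have "card {e\<in>Es S. r \<in> e} = 1" using dt_facts(4)[OF r_arrow] by (simp add: valency_def)
  then obtain e where e: "e \<in> Es S" "r \<in> e" by (metis (mono_tags, lifting) card_1_singletonE mem_Collect_eq singletonI)
  have rr: "r = r \<or> e \<noteq> inn r" by simp
  obtain w where w: "w \<in> cells S" "w \<noteq> r" "par w = r" using child[OF e(1,2) rr] by metis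
  have "{c\<in>cells S - {r}. par c = r} = {w}"
  proof
    show "{w} \<subseteq> {c\<in>cells S - {r}. par c = r}" using w by auto
    show "{c\<in>cells S - {r}. par c = r} \<subseteq> {w}"
    proof
      fix c assume c: "c \<in> {c\<in>cells S - {r}. par c = r}"
      have "inn c \<in> Es S" "r \<in> inn c" using inn_edge[of c] par_in_inn[of c] c by auto
      moreover have "inn w \<in> Es S" "r \<in> inn w" using inn_edge[OF w(1,2)] par_in_inn[of w] w by auto
      ultimately have "inn c = inn w" using edges_r by blast
      then show "c \<in> {w}" using inn_inj[of c w] c w by auto
    qed
  qed
  then show ?thesis using G_top[OF w] by blast
qed

lemma sumP: "(\<Sum>y\<in>cells S - {r}. P y * (int (valency S y) - 2)) = -1"
proof -
  let ?A = "cells S - {r}"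
  let ?W = "\<lambda>y e. Wt S (qd S) {inn y, e} y"
  have finA: "finite ?A" using finX0 by simp
  have loc: "P y * (int (valency S y) - 2) = (\<Sum>e\<in>K y. G y * ?W y e) - G y" if y: "y \<in> ?A" for y
  proof -
    have yc: "y \<in> cells S" "y \<noteq> r" using y by auto
    have conds: "(\<forall>e\<in>K y. qd S e y \<ge> 1) \<and> card {e\<in>K y. qd S e y \<noteq> 1} \<le> 1"
    proof (cases "y \<in> Vs S")
      case True then show ?thesis using cenK by blast
    next
      case False
      then have "y \<in> As S" using yc cells_VA by auto
      then show ?thesis using K_arrow yc by simp
    qed
    have li: "(\<Prod>e\<in>K y. qd S e y) * (int (card (K y)) - 1) = (\<Sum>e\<in>K y. \<Prod>e'\<in>K y - {e}. qd S e' y) - 1"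
      using local_id[OF K_fin[of y], where f="\<lambda>e. qd S e y"] conds by blast
    have W: "(\<Prod>e'\<in>K y - {e}. qd S e' y) = ?W y e" for e
      unfolding Wt_def K_def by (rule arg_cong[where f="\<lambda>A. prod _ A"]) auto
    have "P y * (int (valency S y) - 2) = G y * (Pi y * (int (card (K y)) - 1))"
      using P_split[OF yc] valency_K[OF yc] by simp
    also have "\<dots> = G y * ((\<Sum>e\<in>K y. ?W y e) - 1)" using li W Pi_K by simp
    also have "\<dots> = (\<Sum>e\<in>K y. G y * ?W y e) - G y" by (simp add: sum_distrib_left algebra_simps)
    finally show ?thesis .
  qed
  let ?D = "{c\<in>?A. par c \<noteq> r}"
  let ?h = "\<lambda>c. (par c, inn c)"
  have bij: "bij_betw ?h ?D (Sigma ?A K)"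
  proof (rule bij_betwI')
    fix x y assume "x \<in> ?D" "y \<in> ?D"
    then show "(?h x = ?h y) = (x = y)" using inn_inj by auto
  next
    fix x assume x: "x \<in> ?D"
    then show "?h x \<in> Sigma ?A K" using par_cell inn_in_K_par by auto
  next
    fix ye assume "ye \<in> Sigma ?A K"
    then obtain y e where ye: "ye = (y, e)" "y \<in> ?A" "e \<in> K y" by auto
    have e: "e \<in> Es S" "y \<in> e" "y = r \<or> e \<noteq> inn y" using ye by (auto simp: K_def)
    obtain c where c: "c \<in> cells S" "c \<noteq> r" "par c = y" "inn c = e" using child[OF e] by metis
    then show "\<exists>x\<in>?D. ye = ?h x" using ye by auto
  qed
  have s1: "(\<Sum>y\<in>?A. \<Sum>e\<in>K y. G y * ?W y e) = (\<Sum>c\<in>?D. G c)"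
  proof -
    have "(\<Sum>y\<in>?A. \<Sum>e\<in>K y. G y * ?W y e) = (\<Sum>(y,e)\<in>Sigma ?A K. G y * ?W y e)"
      by (rule sum.Sigma[OF finA]) (simp add: K_fin)
    also have "\<dots> = (\<Sum>c\<in>?D. (\<lambda>(y,e). G y * ?W y e) (?h c))"
      by (rule sum.reindex_bij_betw[OF bij, symmetric])
    also have "\<dots> = (\<Sum>c\<in>?D. G c)"
      by (rule sum.cong) (auto simp: G_step)
    finally show ?thesis .
  qed
  obtain w where w: "{c\<in>?A. par c = r} = {w}" "G w = 1" using top_child by blast
  have s2: "(\<Sum>y\<in>?A. G y) = (\<Sum>c\<in>?D. G c) + (\<Sum>c\<in>{c\<in>?A. par c = r}. G c)"
  proof -
    have u: "?D \<union> {c\<in>?A. par c = r} = ?A" by auto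
    have "(\<Sum>y\<in>?D \<union> {c\<in>?A. par c = r}. G y) = (\<Sum>c\<in>?D. G c) + (\<Sum>c\<in>{c\<in>?A. par c = r}. G c)"
      by (rule sum.union_disjoint) (use finA in auto)
    then show ?thesis unfolding u .
  qed
  have "(\<Sum>y\<in>?A. P y * (int (valency S y) - 2)) = (\<Sum>y\<in>?A. (\<Sum>e\<in>K y. G y * ?W y e) - G y)"
    using loc by (rule sum.cong[OF refl])
  also have "\<dots> = (\<Sum>y\<in>?A. \<Sum>e\<in>K y. G y * ?W y e) - (\<Sum>y\<in>?A. G y)"
    by (simp add: sum_subtractf)
  also have "\<dots> = -1" using s1 s2 w by simp
  finally show ?thesis .
qed

end

context central
begin

lemma M_star:
  assumes f01: "\<forall>\<alpha>\<in>As S. fd S \<alpha> \<in> {0,1}" and fr: "fd S r = 0"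
  shows "Mf (star S r) = 2 * (\<Sum>\<alpha>\<in>As S - A0 S. P \<alpha>) - (\<Sum>\<alpha>\<in>As S - A0 S. P \<alpha>)^2
           + (\<Sum>v\<in>(Vs S \<union> A0 S) - {r}. Nf S v * (int (valency S v) - 2))"
    and "Ff (star S r) = int (card (As S - A0 S))"
    and "(\<Sum>v\<in>(Vs S \<union> A0 S) - {r}. P v * (int (valency S v) - 2)) = (\<Sum>\<alpha>\<in>As S - A0 S. P \<alpha>) - 1"
proof -
  let ?L = "As S - A0 S" and ?Y = "(Vs S \<union> A0 S) - {r}"
  define dS where "dS = (\<Sum>\<alpha>\<in>?L. P \<alpha>)"
  let ?S2 = "star S r"
  have S2: "?S2 = S\<lparr>qd := qs\<rparr>" by (rule star_eq)
  have fL: "fd S \<alpha> = 1" if "\<alpha> \<in> ?L" for \<alpha> using that f01 by (auto simp: A0_def)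
  have rA0: "r \<in> A0 S" using r_arrow fr by (simp add: A0_def)
  have finL: "finite ?L" and finY: "finite ?Y" using dt_facts(1,2) by (auto simp: A0_def)
  have Lc: "?L \<subseteq> cells S - {r}" using rA0 by (auto simp: cells_def)
  have Yc: "?Y \<subseteq> cells S - {r}" by (auto simp: cells_def A0_def)
  have YL: "?Y \<inter> ?L = {}" using dt_facts(3) by (auto simp: A0_def)
  have YLu: "?Y \<union> ?L = cells S - {r}" using rA0 by (auto simp: cells_def A0_def)
  have NS: "Nf S v = (\<Sum>\<alpha>\<in>?L. Pr S (gam S v \<alpha>))" for v
    unfolding Nf_def by (rule sum.cong) (auto simp: xval_Pr fL)
  have NS2: "Nf ?S2 v = (\<Sum>\<alpha>\<in>?L. Pr ?S2 (gam S v \<alpha>))" for v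
    unfolding Nf_def S2 by (rule sum.cong) (auto simp: xval_Pr fL)
  have NY: "Nf ?S2 v = P v * dS - Nf S v" if v: "v \<in> ?Y" for v
  proof -
    have "Nf ?S2 v = (\<Sum>\<alpha>\<in>?L. P v * P \<alpha> - Pr S (gam S v \<alpha>))"
      unfolding NS2
    proof (rule sum.cong[OF refl])
      fix \<alpha> assume a: "\<alpha> \<in> ?L"
      have "v \<noteq> \<alpha>" using a v YL by auto
      then show "Pr ?S2 (gam S v \<alpha>) = P v * P \<alpha> - Pr S (gam S v \<alpha>)"
        using pair_sum[of v \<alpha>] v a Yc Lc by (auto simp: algebra_simps)
    qed
    also have "\<dots> = P v * dS - Nf S v"
      unfolding NS dS_def by (simp add: sum_subtractf sum_distrib_left)
    finally show ?thesis .
  qed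
  have Nr: "Nf ?S2 r = dS"
    unfolding NS2 dS_def
  proof (rule sum.cong[OF refl])
    fix \<alpha> assume "\<alpha> \<in> ?L"
    then have "\<alpha> \<in> cells S" using Lc by auto
    then show "Pr ?S2 (gam S r \<alpha>) = P \<alpha>" using Pr_star_rp S2 by (simp add: gam_gp)
  qed
  have vr: "valency S r = 1" using dt_facts(4)[OF r_arrow] .
  have SP: "(\<Sum>v\<in>?Y. P v * (int (valency S v) - 2)) = dS - 1"
  proof -
    have "(\<Sum>v\<in>?Y \<union> ?L. P v * (int (valency S v) - 2)) = (\<Sum>v\<in>?Y. P v * (int (valency S v) - 2)) + (\<Sum>v\<in>?L. P v * (int (valency S v) - 2))"
      by (rule sum.union_disjoint[OF finY finL YL])
    moreover have "(\<Sum>v\<in>?L. P v * (int (valency S v) - 2)) = - dS"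
      unfolding dS_def by (simp add: dt_facts(4) sum_negf[symmetric])
    ultimately show ?thesis using sumP YLu by simp
  qed
  then show "(\<Sum>v\<in>?Y. P v * (int (valency S v) - 2)) = (\<Sum>\<alpha>\<in>?L. P \<alpha>) - 1" by (simp add: dS_def)
  have "Mf ?S2 = - (\<Sum>v\<in>Vs S \<union> A0 S. Nf ?S2 v * (int (valency S v) - 2))"
    unfolding Mf_def S2 by simp
  also have "(\<Sum>v\<in>Vs S \<union> A0 S. Nf ?S2 v * (int (valency S v) - 2))
      = Nf ?S2 r * (int (valency S r) - 2) + (\<Sum>v\<in>?Y. Nf ?S2 v * (int (valency S v) - 2))"
    using sum.remove[of "Vs S \<union> A0 S" r] rA0 dt_facts(1,2) by (simp add: A0_def)
  also have "(\<Sum>v\<in>?Y. Nf ?S2 v * (int (valency S v) - 2)) = (\<Sum>v\<in>?Y. (P v * dS - Nf S v) * (int (valency S v) - 2))"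
    using NY by (intro sum.cong) auto
  also have "\<dots> = (\<Sum>v\<in>?Y. dS * (P v * (int (valency S v) - 2)) - Nf S v * (int (valency S v) - 2))"
    by (rule sum.cong) (simp_all add: algebra_simps)
  also have "\<dots> = dS * (\<Sum>v\<in>?Y. P v * (int (valency S v) - 2)) - (\<Sum>v\<in>?Y. Nf S v * (int (valency S v) - 2))"
    by (simp add: sum_subtractf sum_distrib_left)
  finally have M: "Mf ?S2 = - (Nf ?S2 r * (int (valency S r) - 2) + (dS * (\<Sum>v\<in>?Y. P v * (int (valency S v) - 2)) - (\<Sum>v\<in>?Y. Nf S v * (int (valency S v) - 2))))" .
  define NYs where "NYs = (\<Sum>v\<in>?Y. Nf S v * (int (valency S v) - 2))"
  define SYs where "SYs = (\<Sum>v\<in>?Y. P v * (int (valency S v) - 2))"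
  have SP': "SYs = dS - 1" using SP unfolding SYs_def .
  have M': "Mf ?S2 = - (dS * (int (valency S r) - 2) + (dS * SYs - NYs))"
    using M Nr unfolding NYs_def[symmetric] SYs_def[symmetric] by simp
  have "Mf ?S2 = 2 * dS - dS^2 + NYs"
    unfolding M' SP' using vr by (simp add: power2_eq_square algebra_simps)
  then show "Mf ?S2 = 2 * (\<Sum>\<alpha>\<in>?L. P \<alpha>) - (\<Sum>\<alpha>\<in>?L. P \<alpha>)^2 + (\<Sum>v\<in>?Y. Nf S v * (int (valency S v) - 2))"
    unfolding dS_def NYs_def .
  have "Ff ?S2 = (\<Sum>\<alpha>\<in>?L. 1)"
    unfolding Ff_def S2 F_arrow_def by (rule sum.cong) (auto simp: fL)
  then show "Ff ?S2 = int (card ?L)" by simp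
qed

end

lemma path_edges_map: "path_edges (map g p) = map (image g) (path_edges p)"
  by (induct p rule: induct_list012) auto

lemma is_path_map:
  assumes inj: "inj_on g X0" and X1: "X1 \<subseteq> Pow X0" and p: "set p \<subseteq> X0"
  shows "is_path (g ` X0) ((image g) ` X1) (map g p) \<longleftrightarrow> is_path X0 X1 p"
proof -
  have pe: "set (path_edges p) \<subseteq> Pow X0" using path_edges_subset p by blast
  have ii: "inj_on (image g) (Pow X0)" by (rule inj_on_image_Pow[OF inj])
  have A: "set (map (image g) (path_edges p)) \<subseteq> (image g) ` X1 \<longleftrightarrow> set (path_edges p) \<subseteq> X1"
  proof
    assume a: "set (map (image g) (path_edges p)) \<subseteq> (image g) ` X1"
    show "set (path_edges p) \<subseteq> X1"
    proof
      fix e assume e: "e \<in> set (path_edges p)"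
      then have "image g e \<in> (image g) ` X1" using a by auto
      moreover have eP: "e \<in> Pow X0" using e pe by blast
      ultimately show "e \<in> X1" using inj_on_image_mem_iff[OF ii eP X1] by simp
    qed
  qed auto
  have B: "distinct (map (image g) (path_edges p)) \<longleftrightarrow> distinct (path_edges p)"
    using distinct_map inj_on_subset[OF ii pe] by auto
  have C: "set (map g p) \<subseteq> g ` X0" using p by auto
  show ?thesis unfolding is_path_alt path_edges_map using A B C p by auto
qed

context tree
begin

lemma sub_tree_iso:
  assumes Y0: "Y0 \<subseteq> X0" and conv: "\<And>x y. x \<in> Y0 \<Longrightarrow> y \<in> Y0 \<Longrightarrow> set (gp x y) \<subseteq> Y0"
    and inj: "inj_on g Y0"
  shows "is_tree (g ` Y0) ((image g) ` {e\<in>X1. e \<subseteq> Y0})"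
    and "\<And>x y. x \<in> Y0 \<Longrightarrow> y \<in> Y0 \<Longrightarrow>
      (THE p. is_path (g ` Y0) ((image g) ` {e\<in>X1. e \<subseteq> Y0}) p \<and> hd p = g x \<and> last p = g y) = map g (gp x y)"
proof -
  define Y1 where "Y1 = {e\<in>X1. e \<subseteq> Y0}"
  have Y1: "Y1 \<subseteq> Pow Y0" by (auto simp: Y1_def)
  have pathY: "is_path Y0 Y1 p \<longleftrightarrow> is_path X0 X1 p \<and> set p \<subseteq> Y0" for p
  proof
    assume "is_path Y0 Y1 p"
    then show "is_path X0 X1 p \<and> set p \<subseteq> Y0"
      using is_path_mono[of Y0 Y1 p X0 X1] Y0 by (auto simp: Y1_def is_path_alt)
  next
    assume a: "is_path X0 X1 p \<and> set p \<subseteq> Y0"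
    then have "set (path_edges p) \<subseteq> Y1" using path_edges_subset by (fastforce simp: Y1_def is_path_alt)
    then show "is_path Y0 Y1 p" using a by (auto simp: is_path_alt)
  qed
  have ex: "is_path (g ` Y0) ((image g) ` Y1) (map g (gp x y)) \<and> hd (map g (gp x y)) = g x \<and> last (map g (gp x y)) = g y"
    if xy: "x \<in> Y0" "y \<in> Y0" for x y
  proof -
    have xy0: "x \<in> X0" "y \<in> X0" using xy Y0 by auto
    have "is_path Y0 Y1 (gp x y)" using pathY gp_path[OF xy0] conv[OF xy] by blast
    then have "is_path (g ` Y0) ((image g) ` Y1) (map g (gp x y))"
      using is_path_map[OF inj Y1 conv[OF xy]] by blast
    moreover have "hd (map g (gp x y)) = g x" using gp_hd[OF xy0] gp_ne[OF xy0] by (simp add: hd_map)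
    moreover have "last (map g (gp x y)) = g y" using gp_last[OF xy0] gp_ne[OF xy0] by (simp add: last_map)
    ultimately show ?thesis by blast
  qed
  have uniq: "p' = map g (gp x y)"
    if xy: "x \<in> Y0" "y \<in> Y0" and p': "is_path (g ` Y0) ((image g) ` Y1) p'" "hd p' = g x" "last p' = g y" for x y p'
  proof -
    have sp': "set p' \<subseteq> g ` Y0" and ne: "p' \<noteq> []" using p'(1) by (auto simp: is_path_alt)
    define p where "p = map (inv_into Y0 g) p'"
    have mp: "map g p = p'" unfolding p_def using sp' by (induct p') (auto simp: f_inv_into_f)
    have sp: "set p \<subseteq> Y0" unfolding p_def using sp' by (auto intro: inv_into_into)
    have "is_path Y0 Y1 p" using is_path_map[OF inj Y1 sp] p'(1) mp by simp
    then have pX: "is_path X0 X1 p" using pathY by blast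
    have pne: "p \<noteq> []" using ne mp by auto
    have "g (hd p) = g x" using p'(2) mp pne by (metis hd_map)
    then have hp: "hd p = x" using inj sp xy pne by (meson hd_in_set inj_onD subsetD)
    have "g (last p) = g y" using p'(3) mp pne by (metis last_map)
    then have lp: "last p = y" using inj sp xy pne by (meson last_in_set inj_onD subsetD)
    have "p = gp x y" using gp_eqI[OF pX hp lp] by simp
    then show ?thesis using mp by simp
  qed
  show "is_tree (g ` Y0) ((image g) ` {e\<in>X1. e \<subseteq> Y0})"
    unfolding Y1_def[symmetric] is_tree_def
  proof (intro conjI ballI)
    have f1: "finite (g ` Y0)" using finite_subset[OF Y0 finX0] by simp
    have f2: "finite ((image g) ` Y1)" using finite_subset[of Y1 X1] finX1 by (auto simp: Y1_def)
    have f3: "\<forall>e'\<in>(image g) ` Y1. e' \<subseteq> g ` Y0 \<and> card e' = 2"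
    proof
      fix e' assume "e' \<in> (image g) ` Y1"
      then obtain e where e: "e' = g ` e" "e \<in> Y1" by blast
      have "card e = 2" using e(2) edge_card by (auto simp: Y1_def)
      moreover have "inj_on g e" using inj e(2) by (auto simp: Y1_def intro: inj_on_subset)
      ultimately show "e' \<subseteq> g ` Y0 \<and> card e' = 2" using e by (auto simp: Y1_def card_image)
    qed
    show "is_graph (g ` Y0) ((image g) ` Y1)"
      unfolding is_graph_def using f1 f2 f3 by blast
  next
    fix x' y' assume x': "x' \<in> g ` Y0" and y': "y' \<in> g ` Y0"
    then obtain x y where xy: "x \<in> Y0" "y \<in> Y0" "x' = g x" "y' = g y" by blast
    show "\<exists>!p. is_path (g ` Y0) ((image g) ` Y1) p \<and> hd p = x' \<and> last p = y'"
      unfolding xy(3,4)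
    proof (rule ex1I[where a="map g (gp x y)"])
      show "is_path (g ` Y0) ((image g) ` Y1) (map g (gp x y)) \<and> hd (map g (gp x y)) = g x \<and> last (map g (gp x y)) = g y"
        using ex[OF xy(1,2)] .
    next
      fix p assume "is_path (g ` Y0) ((image g) ` Y1) p \<and> hd p = g x \<and> last p = g y"
      then show "p = map g (gp x y)" using uniq[OF xy(1,2)] by blast
    qed
  qed
  fix x y assume xy: "x \<in> Y0" "y \<in> Y0"
  show "(THE p. is_path (g ` Y0) ((image g) ` {e\<in>X1. e \<subseteq> Y0}) p \<and> hd p = g x \<and> last p = g y) = map g (gp x y)"
    unfolding Y1_def[symmetric] using ex[OF xy] uniq[OF xy] by (intro the_equality) blast+
qed

end

locale mainT = rooted T v0 for T :: "('a,'b) dtree_scheme" and v0 +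
  assumes root: "is_root T v0" and f01: "\<forall>\<alpha>\<in>As T. fd T \<alpha> \<in> {0,1}"
begin

definition E' where "E' = {e\<in>Es T. v0 \<notin> e}"
definition R where "R = {(a,b). {a,b} \<in> E'}"
definition C where "C w = comp_cells E' w"
abbreviation nb where "nb \<equiv> nbrs T v0"
definition PT where "PT y = Pr T (rp y)"

lemma C_def': "C w = {x. (w,x) \<in> R\<^sup>*}"
  by (simp add: C_def comp_cells_def R_def)

lemma E'_sub: "E' \<subseteq> Es T" by (auto simp: E'_def)

lemma v0V: "v0 \<in> Vs T" using root by (simp add: is_root_def)

lemma qv0: "e \<in> Es T \<Longrightarrow> v0 \<in> e \<Longrightarrow> qd T e v0 = 1"
  using root by (simp add: is_root_def)

lemma rootc: "v \<in> Vs T \<Longrightarrow> v \<noteq> v0 \<Longrightarrow>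
   (\<forall>e\<in>Es T. v \<in> e \<and> e \<notin> set (path_edges (gam T v0 v)) \<longrightarrow> qd T e v \<ge> 1) \<and>
   card {e \<in> Es T. v \<in> e \<and> e \<notin> set (path_edges (gam T v0 v)) \<and> qd T e v \<noteq> 1} \<le> 1"
  using root by (simp add: is_root_def)

lemma Wt_v0: "Wt T (qd T) F v0 = 1"
  unfolding Wt_def by (rule prod.neutral) (simp add: qv0)

lemma R_sym: "(a,b) \<in> R\<^sup>* \<Longrightarrow> (b,a) \<in> R\<^sup>*"
proof -
  assume "(a,b) \<in> R\<^sup>*"
  then have "(b,a) \<in> (R\<inverse>)\<^sup>*" by (rule rtrancl_converseI)
  moreover have "R\<inverse> = R" by (auto simp: R_def insert_commute)
  ultimately show ?thesis by simp
qed

lemma nb_facts: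
  assumes w: "w \<in> nb"
  shows "{v0,w} \<in> Es T \<and> w \<in> cells T \<and> w \<noteq> v0 \<and> par w = v0 \<and> rp w = [v0, w]"
proof -
  have e: "{v0,w} \<in> Es T" using w by (simp add: nbrs_def)
  have v: "v0 \<in> {v0,w}" by simp
  have vv: "v0 = v0 \<or> {v0,w} \<noteq> inn v0" by simp
  obtain c where c: "{v0,w} = {v0,c}" "c \<in> cells T" "c \<noteq> v0" "par c = v0" using child[OF e v vv] by metis
  have cw: "c = w" using c(1,3) by (auto simp: doubleton_eq_iff)
  have cc: "w \<in> cells T" "w \<noteq> v0" "par w = v0" using c(2,3,4) cw by auto
  have "rp w = [v0, w]" using rp_snoc[OF cc(1,2)] cc(3) rp_r by simp
  then show ?thesis using e cc by simp
qed

lemma v0_notC: "w \<in> nb \<Longrightarrow> v0 \<notin> C w"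
proof
  assume w: "w \<in> nb" and "v0 \<in> C w"
  then have r: "(w, v0) \<in> R\<^sup>*" by (simp add: C_def')
  show False
  proof (rule rtranclE[OF r])
    assume "w = v0" then show False using nb_facts[OF w] by simp
  next
    fix y assume "(y, v0) \<in> R"
    then show False by (simp add: R_def E'_def)
  qed
qed

lemma w_in_C: "w \<in> C w" by (simp add: C_def')

lemma C_facts:
  assumes w: "w \<in> nb" and x: "x \<in> C w"
  shows "x \<in> cells T \<and> x \<noteq> v0 \<and> set (gp w x) \<subseteq> C w \<and> rp x = v0 # gp w x"
proof -
  have wf: "{v0,w} \<in> Es T" "w \<in> cells T" "w \<noteq> v0" using nb_facts[OF w] by auto
  have r: "(w,x) \<in> R\<^sup>*" using x by (simp add: C_def')
  have gr: "x \<in> cells T \<and> set (gp w x) \<subseteq> C w"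
    using gp_reach[OF E'_sub r[unfolded R_def] wf(2)] by (simp add: C_def' R_def)
  have xv: "x \<noteq> v0" using x v0_notC[OF w] by auto
  have vn: "v0 \<notin> set (gp w x)" using gr v0_notC[OF w] by auto
  have pth: "is_path (cells T) (Es T) (gp w x)" using gp_path[OF wf(2)] gr by simp
  have "last (rev (gp w x)) = w" using gp_hd[OF wf(2)] gr gp_ne[OF wf(2)] by (simp add: last_rev)
  then have "{last (rev (gp w x)), v0} \<in> Es T" using wf(1) by (simp add: insert_commute)
  then have "is_path (cells T) (Es T) (rev (gp w x) @ [v0])"
    using is_path_snoc[of "cells T" "Es T" "rev (gp w x)" v0] pth vn r_cell by simp
  then have p2: "is_path (cells T) (Es T) (v0 # gp w x)" using is_path_rev[of "cells T" "Es T" "v0 # gp w x"] by simp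
  have "rp x = v0 # gp w x"
    by (rule gp_eqI[OF p2]) (use gp_last[OF wf(2)] gr gp_ne[OF wf(2)] in auto)
  then show ?thesis using gr xv by simp
qed

lemma C_cover: "x \<in> cells T \<Longrightarrow> x \<noteq> v0 \<Longrightarrow> \<exists>w\<in>nb. x \<in> C w"
proof -
  assume x: "x \<in> cells T" "x \<noteq> v0"
  obtain t where t: "rp x = v0 # t" using rp_hd[OF x(1)] rp_ne[OF x(1)] by (cases "rp x") auto
  have tne: "t \<noteq> []" using t rp_last[OF x(1)] x(2) by auto
  have pt: "is_path (cells T) (Es T) t" using is_path_appendD2[of "cells T" "Es T" "[v0]" t] rp_path[OF x(1)] t tne by simp
  have "{v0, hd t} \<in> set (path_edges (rp x))" using t tne by (cases t) auto
  then have e: "{v0, hd t} \<in> Es T" using gp_edges[OF r_cell x(1)] by blast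
  then have wn: "hd t \<in> nb" by (simp add: nbrs_def)
  have vn: "v0 \<notin> set t" using rp_distinct[OF x(1)] t by simp
  have "set (path_edges t) \<subseteq> E'" using pt vn path_edges_subset by (fastforce simp: E'_def is_path_alt)
  then have "(hd t, last t) \<in> R\<^sup>*" using path_reach[OF pt] by (simp add: R_def)
  moreover have "last t = x" using t tne rp_last[OF x(1)] by simp
  ultimately show ?thesis using wn by (auto simp: C_def')
qed

lemma C_disj: "w \<in> nb \<Longrightarrow> w' \<in> nb \<Longrightarrow> x \<in> C w \<Longrightarrow> x \<in> C w' \<Longrightarrow> w = w'"
proof -
  assume a: "w \<in> nb" "w' \<in> nb" "x \<in> C w" "x \<in> C w'"
  have "gp w x = gp w' x" using C_facts[OF a(1,3)] C_facts[OF a(2,4)] by simp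
  then show ?thesis using gp_hd[of w x] gp_hd[of w' x] C_facts[OF a(1,3)] nb_facts[OF a(1)] nb_facts[OF a(2)] by metis
qed

lemma C_conv: "w \<in> nb \<Longrightarrow> x \<in> C w \<Longrightarrow> y \<in> C w \<Longrightarrow> set (gp x y) \<subseteq> C w"
proof -
  assume w: "w \<in> nb" and x: "x \<in> C w" and y: "y \<in> C w"
  have wx: "(w,x) \<in> R\<^sup>*" and wy: "(w,y) \<in> R\<^sup>*" using x y by (auto simp: C_def')
  have "(x,y) \<in> R\<^sup>*" using R_sym[OF wx] wy by simp
  then have "set (gp x y) \<subseteq> {z. (x,z) \<in> R\<^sup>*}"
    using gp_reach[OF E'_sub, of x y] C_facts[OF w x] by (simp add: R_def)
  then show ?thesis using wx by (auto simp: C_def' intro: rtrancl_trans)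
qed

lemma C_edges: "w \<in> nb \<Longrightarrow> x \<in> C w \<Longrightarrow> e \<in> Es T \<Longrightarrow> x \<in> e \<Longrightarrow> e \<subseteq> insert v0 (C w)"
proof -
  assume w: "w \<in> nb" and x: "x \<in> C w" and e: "e \<in> Es T" "x \<in> e"
  obtain y where y: "e = {x,y}" "x \<noteq> y" using edge_form[OF e] by blast
  show ?thesis
  proof (cases "y = v0")
    case False
    have "v0 \<notin> e" using y False C_facts[OF w x] by auto
    then have "(x,y) \<in> R" using e y by (simp add: R_def E'_def)
    then have "y \<in> C w" using x by (auto simp: C_def' intro: rtrancl_into_rtrancl)
    then show ?thesis using y x by auto
  qed (use y x in auto)
qed

lemma X_conv: "w \<in> nb \<Longrightarrow> x \<in> insert v0 (C w) \<Longrightarrow> y \<in> insert v0 (C w) \<Longrightarrow> set (gp x y) \<subseteq> insert v0 (C w)"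
proof -
  assume w: "w \<in> nb" and x: "x \<in> insert v0 (C w)" and y: "y \<in> insert v0 (C w)"
  show ?thesis
  proof (cases "x = v0")
    case True
    show ?thesis
    proof (cases "y = v0")
      case True then show ?thesis using \<open>x = v0\<close> rp_r by simp
    next
      case False
      then have "y \<in> C w" using y by simp
      then show ?thesis using C_facts[OF w] True by auto
    qed
  next
    case xF: False
    then have xC: "x \<in> C w" using x by simp
    show ?thesis
    proof (cases "y = v0")
      case True
      have "gp x y = rev (rp x)" using gp_rev[OF r_cell, of x] C_facts[OF w xC] True by simp
      then show ?thesis using C_facts[OF w xC] by auto
    next
      case False
      then have "y \<in> C w" using y by simp
      then show ?thesis using C_conv[OF w xC] by blast
    qed
  qed
qed

lemma Ew_eq: "w \<in> nb \<Longrightarrow> {e\<in>Es T. e \<subseteq> insert v0 (C w)} = insert {v0,w} {e\<in>E'. e \<subseteq> C w}"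
proof -
  assume w: "w \<in> nb"
  have wf: "{v0,w} \<in> Es T" using nb_facts[OF w] by simp
  show ?thesis
  proof
    show "{e\<in>Es T. e \<subseteq> insert v0 (C w)} \<subseteq> insert {v0,w} {e\<in>E'. e \<subseteq> C w}"
    proof
      fix e assume e: "e \<in> {e\<in>Es T. e \<subseteq> insert v0 (C w)}"
      show "e \<in> insert {v0,w} {e\<in>E'. e \<subseteq> C w}"
      proof (cases "v0 \<in> e")
        case True
        obtain y where y: "e = {v0,y}" "v0 \<noteq> y" using edge_form[of e v0] e True by blast
        have yC: "y \<in> C w" using e y by auto
        have yn: "y \<in> nb" using e y by (simp add: nbrs_def)
        have "y = w" using C_disj[OF yn w w_in_C yC] .
        then show ?thesis using y by simp
      next
        case False then show ?thesis using e by (auto simp: E'_def)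
      qed
    qed
  next
    show "insert {v0,w} {e\<in>E'. e \<subseteq> C w} \<subseteq> {e\<in>Es T. e \<subseteq> insert v0 (C w)}"
      using wf w_in_C by (auto simp: E'_def)
  qed
qed

lemma nb_card: "finite nb \<and> int (card nb) = int (valency T v0)"
proof -
  have bij: "bij_betw (\<lambda>w. {v0,w}) nb {e\<in>Es T. v0 \<in> e}"
  proof (rule bij_betwI')
    fix x y assume "x \<in> nb" "y \<in> nb"
    then show "({v0,x} = {v0,y}) = (x = y)" using nb_facts by (auto simp: doubleton_eq_iff)
  next
    fix x assume "x \<in> nb" then show "{v0,x} \<in> {e\<in>Es T. v0 \<in> e}" by (simp add: nbrs_def)
  next
    fix e assume "e \<in> {e\<in>Es T. v0 \<in> e}"
    then obtain y where "e = {v0,y}" "e \<in> Es T" using edge_form by blast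
    then show "\<exists>x\<in>nb. e = {v0,x}" by (auto simp: nbrs_def)
  qed
  have fin: "finite {e\<in>Es T. v0 \<in> e}" using finX1 by simp
  have "finite nb" using bij_betw_finite[OF bij] fin by simp
  moreover have "card nb = card {e\<in>Es T. v0 \<in> e}" using bij_betw_same_card[OF bij] .
  ultimately show ?thesis by (simp add: valency_def)
qed

end

context mainT
begin

lemma T6:
  assumes w: "w \<in> nb" and w': "w' \<in> nb" and ww: "w \<noteq> w'" and u: "u \<in> C w" and a: "\<alpha> \<in> C w'"
  shows "Pr T (gam T u \<alpha>) = PT u * PT \<alpha>"
proof -
  have uf: "u \<in> cells T" "u \<noteq> v0" "rp u = v0 # gp w u" "set (gp w u) \<subseteq> C w" using C_facts[OF w u] by auto
  have af: "\<alpha> \<in> cells T" "\<alpha> \<noteq> v0" "rp \<alpha> = v0 # gp w' \<alpha>" "set (gp w' \<alpha>) \<subseteq> C w'" using C_facts[OF w' a] by auto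
  have wc: "w \<in> cells T" "w' \<in> cells T" using nb_facts[OF w] nb_facts[OF w'] by auto
  have dj: "C w \<inter> C w' = {}" using C_disj[OF w w'] ww by blast
  have v0C: "v0 \<notin> C w" "v0 \<notin> C w'" using v0_notC w w' by auto
  define q where "q = rev (rp u) @ tl (rp \<alpha>)"
  have tla: "tl (rp \<alpha>) = gp w' \<alpha>" using af by simp
  have tlne: "gp w' \<alpha> \<noteq> []" using gp_ne[OF wc(2) af(1)] .
  have Su: "set (rp u) \<subseteq> insert v0 (C w)" using uf by auto
  have Sa: "set (rp \<alpha>) \<subseteq> insert v0 (C w')" using af by auto
  have pe: "path_edges q = path_edges (rev (rp u)) @ path_edges (rp \<alpha>)"
    unfolding q_def by (rule path_edges_tl_append) (use rp_ne uf af in \<open>auto simp: last_rev\<close>)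
  have sq: "set q = set (rp u) \<union> set (rp \<alpha>)" unfolding q_def using af(3) uf(3) by auto
  have spe: "set (path_edges q) = set (path_edges (rp u)) \<union> set (path_edges (rp \<alpha>))"
    using pe by (simp add: path_edges_rev)
  have dis: "set (path_edges (rp u)) \<inter> set (path_edges (rp \<alpha>)) = {}"
  proof (rule ccontr)
    assume "set (path_edges (rp u)) \<inter> set (path_edges (rp \<alpha>)) \<noteq> {}"
    then obtain e where e: "e \<in> set (path_edges (rp u))" "e \<in> set (path_edges (rp \<alpha>))" by blast
    have "e \<subseteq> {v0}" using path_edges_subset[OF e(1)] path_edges_subset[OF e(2)] Su Sa dj by blast
    moreover have "card e = 2" using edge_card e(1) gp_edges[OF r_cell uf(1)] by blast
    ultimately show False using card_mono[of "{v0}" e] by simp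
  qed
  have qp: "is_path (cells T) (Es T) q"
    unfolding is_path_alt
  proof (intro conjI)
    show "q \<noteq> []" unfolding q_def using rp_ne[OF uf(1)] by simp
    show "set q \<subseteq> cells T" unfolding sq using rp_set uf af by blast
    show "set (path_edges q) \<subseteq> Es T" unfolding spe using gp_edges r_cell uf af by blast
    show "distinct (path_edges q)" unfolding pe using dis rp_path[OF uf(1)] rp_path[OF af(1)]
      by (auto simp: is_path_alt path_edges_rev)
  qed
  have hq: "hd q = u" unfolding q_def using rp_ne[OF uf(1)] rp_last[OF uf(1)] by (simp add: hd_rev)
  have lq: "last q = \<alpha>" unfolding q_def using tla tlne gp_last[OF wc(2) af(1)] by simp
  have gq: "gam T u \<alpha> = q" using gp_eqI[OF qp hq lq] gam_gp by simp
  let ?Eu = "set (path_edges (rp u))" and ?Ea = "set (path_edges (rp \<alpha>))"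
  have Au: "Wt T (qd T) (?Eu \<union> ?Ea) x = Wt T (qd T) ?Eu x" if "x \<in> set (rp u) - {v0}" for x
  proof -
    have "x \<in> C w" using that Su by auto
    then have "\<forall>e\<in>?Ea. x \<notin> e" using path_edges_subset Sa dj v0C by blast
    then show ?thesis by (intro Wt_cong) auto
  qed
  have Aa: "Wt T (qd T) (?Eu \<union> ?Ea) x = Wt T (qd T) ?Ea x" if "x \<in> set (rp \<alpha>) - {v0}" for x
  proof -
    have "x \<in> C w'" using that Sa by auto
    then have "\<forall>e\<in>?Eu. x \<notin> e" using path_edges_subset Su dj v0C by blast
    then show ?thesis by (intro Wt_cong) auto
  qed
  have v0u: "v0 \<in> set (rp u)" using r_in_rp[OF uf(1)] .
  have v0a: "v0 \<in> set (rp \<alpha>)" using r_in_rp[OF af(1)] .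
  have un: "set (rp u) \<union> set (rp \<alpha>) = insert v0 ((set (rp u) - {v0}) \<union> (set (rp \<alpha>) - {v0}))" using v0u by auto
  have dj2: "(set (rp u) - {v0}) \<inter> (set (rp \<alpha>) - {v0}) = {}" using Su Sa dj by blast
  have "Pr T q = (\<Prod>x\<in>set (rp u) \<union> set (rp \<alpha>). Wt T (qd T) (?Eu \<union> ?Ea) x)"
    using Pr_cells[OF qp] sq spe by simp
  also have "\<dots> = Wt T (qd T) (?Eu \<union> ?Ea) v0 * ((\<Prod>x\<in>set (rp u) - {v0}. Wt T (qd T) (?Eu \<union> ?Ea) x) * (\<Prod>x\<in>set (rp \<alpha>) - {v0}. Wt T (qd T) (?Eu \<union> ?Ea) x))"
    unfolding un using dj2 by (simp add: prod.union_disjoint)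
  also have "\<dots> = (\<Prod>x\<in>set (rp u) - {v0}. Wt T (qd T) ?Eu x) * (\<Prod>x\<in>set (rp \<alpha>) - {v0}. Wt T (qd T) ?Ea x)"
    using Au Aa Wt_v0 by simp
  also have "(\<Prod>x\<in>set (rp u) - {v0}. Wt T (qd T) ?Eu x) = PT u"
    unfolding PT_def Pr_cells[OF rp_path[OF uf(1)]] using prod.remove[of "set (rp u)" v0 "Wt T (qd T) ?Eu"] v0u Wt_v0 by simp
  also have "(\<Prod>x\<in>set (rp \<alpha>) - {v0}. Wt T (qd T) ?Ea x) = PT \<alpha>"
    unfolding PT_def Pr_cells[OF rp_path[OF af(1)]] using prod.remove[of "set (rp \<alpha>)" v0 "Wt T (qd T) ?Ea"] v0a Wt_v0 by simp
  finally show ?thesis using gq by simp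
qed

end

locale branch = mainT +
  fixes w assumes w_nb: "w \<in> nb"
begin

definition gg where "gg x = (if x = v0 then None else Some x)"
abbreviation Xw where "Xw \<equiv> insert v0 (C w)"
abbreviation SS where "SS \<equiv> Tprime T v0 w"
definition Ew where "Ew = {e\<in>Es T. e \<subseteq> Xw}"

lemma Tp_Vs: "Vs SS = Some ` (Vs T \<inter> C w)"
  by (simp add: Tprime_def Let_def C_def E'_def)
lemma Tp_As: "As SS = insert None (Some ` (As T \<inter> C w))"
  by (simp add: Tprime_def Let_def C_def E'_def)
lemma Tp_Es: "Es SS = insert {None, Some w} ((\<lambda>e. Some ` e) ` {e\<in>E'. e \<subseteq> C w})"
  by (simp add: Tprime_def Let_def C_def E'_def)
lemma Tp_fd: "fd SS x = (case x of None \<Rightarrow> 0 | Some y \<Rightarrow> fd T y)"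
  by (simp add: Tprime_def Let_def)
lemma Tp_qd: "qd SS e x = (if e = {None, Some w} then (if x = None then 1 else qd T {v0, w} w)
    else (case x of None \<Rightarrow> 0 | Some y \<Rightarrow> qd T (Some -` e) y))"
  by (simp add: Tprime_def Let_def)

lemma wf: "{v0,w} \<in> Es T" "w \<in> cells T" "w \<noteq> v0" using nb_facts[OF w_nb] by auto
lemma v0C: "v0 \<notin> C w" using v0_notC[OF w_nb] .
lemma Ccells: "C w \<subseteq> cells T" using C_facts[OF w_nb] by blast
lemma Xw_cells: "Xw \<subseteq> cells T" using Ccells r_cell by blast
lemma gg_C: "x \<in> C w \<Longrightarrow> gg x = Some x" using v0C by (auto simp: gg_def)
lemma gg_v0: "gg v0 = None" by (simp add: gg_def)
lemma inj_gg: "inj_on gg Xw" by (rule inj_onI) (auto simp: gg_def split: if_splits)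
lemma gg_C_img: "A \<subseteq> C w \<Longrightarrow> gg ` A = Some ` A"
  by (rule image_cong[OF refl]) (use gg_C in auto)

lemma cells_SS: "cells SS = gg ` Xw"
proof -
  have "cells SS = insert None (Some ` ((Vs T \<union> As T) \<inter> C w))"
    unfolding cells_def Tp_Vs Tp_As by auto
  also have "(Vs T \<union> As T) \<inter> C w = C w" using Ccells by (auto simp: cells_def)
  also have "insert None (Some ` C w) = gg ` Xw" using gg_C_img[of "C w"] gg_v0 by simp
  finally show ?thesis .
qed

lemma Ew_eq': "Ew = insert {v0,w} {e\<in>E'. e \<subseteq> C w}" unfolding Ew_def by (rule Ew_eq[OF w_nb])

lemma Es_SS: "Es SS = (image gg) ` Ew"
proof -
  have "(image gg) ` Ew = insert (gg ` {v0,w}) ((image gg) ` {e\<in>E'. e \<subseteq> C w})" unfolding Ew_eq' by simp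
  also have "gg ` {v0,w} = {None, Some w}" using gg_v0 gg_C[OF w_in_C] by simp
  also have "(image gg) ` {e\<in>E'. e \<subseteq> C w} = (\<lambda>e. Some ` e) ` {e\<in>E'. e \<subseteq> C w}"
    by (rule image_cong[OF refl]) (use gg_C_img in auto)
  finally show ?thesis unfolding Tp_Es by simp
qed

lemma Ew_Pow: "Ew \<subseteq> Pow Xw" by (auto simp: Ew_def)

lemma tree_SS: "is_tree (cells SS) (Es SS)"
  and gam_SS: "x \<in> Xw \<Longrightarrow> y \<in> Xw \<Longrightarrow> gam SS (gg x) (gg y) = map gg (gam T x y)"
proof -
  have conv: "\<And>x y. x \<in> Xw \<Longrightarrow> y \<in> Xw \<Longrightarrow> set (gp x y) \<subseteq> Xw" using X_conv[OF w_nb] by blast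
  note iso = sub_tree_iso[OF Xw_cells conv inj_gg]
  show "is_tree (cells SS) (Es SS)" unfolding cells_SS Es_SS Ew_def by (rule iso(1))
  fix x y assume "x \<in> Xw" "y \<in> Xw"
  then show "gam SS (gg x) (gg y) = map gg (gam T x y)"
    unfolding gam_def cells_SS Es_SS Ew_def using iso(2) gam_gp by (simp add: gam_def)
qed

lemma qd_SS: "e \<in> Ew \<Longrightarrow> u \<in> e \<Longrightarrow> qd SS (gg ` e) (gg u) = qd T e u"
proof -
  assume e: "e \<in> Ew" and u: "u \<in> e"
  show ?thesis
  proof (cases "e = {v0,w}")
    case True
    have img: "gg ` e = {None, Some w}" using True gg_v0 gg_C[OF w_in_C] by simp
    show ?thesis
    proof (cases "u = v0")
      case True
      then show ?thesis using img gg_v0 qv0 wf(1) \<open>e = {v0,w}\<close> Tp_qd by simp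
    next
      case False
      then have "u = w" using u \<open>e = {v0,w}\<close> by simp
      then show ?thesis using img gg_C[OF w_in_C] \<open>e = {v0,w}\<close> Tp_qd by simp
    qed
  next
    case False
    then have eC: "e \<subseteq> C w" using e Ew_eq' by auto
    have img: "gg ` e = Some ` e" using gg_C_img[OF eC] .
    have ne: "Some ` e \<noteq> {None, Some w}" by auto
    have "u \<in> C w" using eC u by auto
    then show ?thesis using img ne Tp_qd gg_C by (simp add: inj_vimage_image_eq)
  qed
qed

lemma edges_at_SS: "u \<in> C w \<Longrightarrow> F \<subseteq> Pow Xw \<Longrightarrow>
   {\<epsilon>\<in>Es SS. gg u \<in> \<epsilon> \<and> \<epsilon> \<notin> (image gg) ` F} = (image gg) ` {e\<in>Es T. u \<in> e \<and> e \<notin> F}"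
proof -
  assume u: "u \<in> C w" and F: "F \<subseteq> Pow Xw"
  have ii: "inj_on (image gg) (Pow Xw)" by (rule inj_on_image_Pow[OF inj_gg])
  have uX: "u \<in> Xw" using u by simp
  show ?thesis
  proof
    show "{\<epsilon>\<in>Es SS. gg u \<in> \<epsilon> \<and> \<epsilon> \<notin> (image gg) ` F} \<subseteq> (image gg) ` {e\<in>Es T. u \<in> e \<and> e \<notin> F}"
    proof
      fix \<epsilon> assume a: "\<epsilon> \<in> {\<epsilon>\<in>Es SS. gg u \<in> \<epsilon> \<and> \<epsilon> \<notin> (image gg) ` F}"
      then obtain e where e: "\<epsilon> = gg ` e" "e \<in> Ew" using Es_SS by auto
      have eX: "e \<subseteq> Xw" using e(2) by (simp add: Ew_def)
      have "u \<in> e" using a e inj_on_image_mem_iff[OF inj_gg uX eX] by simp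
      moreover have "e \<notin> F" using a e by auto
      ultimately show "\<epsilon> \<in> (image gg) ` {e\<in>Es T. u \<in> e \<and> e \<notin> F}" using e(1,2) by (auto simp: Ew_def)
    qed
  next
    show "(image gg) ` {e\<in>Es T. u \<in> e \<and> e \<notin> F} \<subseteq> {\<epsilon>\<in>Es SS. gg u \<in> \<epsilon> \<and> \<epsilon> \<notin> (image gg) ` F}"
    proof
      fix \<epsilon> assume "\<epsilon> \<in> (image gg) ` {e\<in>Es T. u \<in> e \<and> e \<notin> F}"
      then obtain e where e: "\<epsilon> = gg ` e" "e \<in> Es T" "u \<in> e" "e \<notin> F" by auto
      have eX: "e \<subseteq> Xw" using C_edges[OF w_nb u e(2,3)] .
      then have eE: "e \<in> Ew" using e(2) by (simp add: Ew_def)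
      have "gg ` e \<notin> (image gg) ` F" using e(4) inj_on_image_mem_iff[OF ii _ F] eX by auto
      then show "\<epsilon> \<in> {\<epsilon>\<in>Es SS. gg u \<in> \<epsilon> \<and> \<epsilon> \<notin> (image gg) ` F}" using e eE Es_SS by auto
    qed
  qed
qed

lemma None_edges: "\<epsilon> \<in> Es SS \<Longrightarrow> None \<in> \<epsilon> \<Longrightarrow> \<epsilon> = {None, Some w}"
  unfolding Tp_Es by auto

lemma Wt_SS: "u \<in> Xw \<Longrightarrow> F \<subseteq> Pow Xw \<Longrightarrow> Wt SS (qd SS) ((image gg) ` F) (gg u) = Wt T (qd T) F u"
proof -
  assume u: "u \<in> Xw" and F: "F \<subseteq> Pow Xw"
  show ?thesis
  proof (cases "u = v0")
    case True
    have "Wt SS (qd SS) ((image gg) ` F) None = 1"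
      unfolding Wt_def by (rule prod.neutral) (use None_edges Tp_qd in auto)
    then show ?thesis using True gg_v0 Wt_v0 by simp
  next
    case False
    then have uC: "u \<in> C w" using u by simp
    have sub: "{e\<in>Es T. u \<in> e \<and> e \<notin> F} \<subseteq> Pow Xw" using C_edges[OF w_nb uC] by blast
    have ii: "inj_on (image gg) {e\<in>Es T. u \<in> e \<and> e \<notin> F}"
      by (rule inj_on_subset[OF inj_on_image_Pow[OF inj_gg] sub])
    have "Wt SS (qd SS) ((image gg) ` F) (gg u) = (\<Prod>\<epsilon>\<in>(image gg) ` {e\<in>Es T. u \<in> e \<and> e \<notin> F}. qd SS \<epsilon> (gg u))"
      unfolding Wt_def edges_at_SS[OF uC F] ..
    also have "\<dots> = (\<Prod>e\<in>{e\<in>Es T. u \<in> e \<and> e \<notin> F}. qd SS (gg ` e) (gg u))"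
      using prod.reindex[OF ii, of "\<lambda>\<epsilon>. qd SS \<epsilon> (gg u)"] by (simp add: comp_def)
    also have "\<dots> = (\<Prod>e\<in>{e\<in>Es T. u \<in> e \<and> e \<notin> F}. qd T e u)"
      by (rule prod.cong[OF refl]) (use qd_SS C_edges[OF w_nb uC] in \<open>auto simp: Ew_def\<close>)
    finally show ?thesis unfolding Wt_def .
  qed
qed

lemma valency_SS: "u \<in> C w \<Longrightarrow> valency SS (gg u) = valency T u"
proof -
  assume uC: "u \<in> C w"
  have sub: "{e\<in>Es T. u \<in> e \<and> e \<notin> {}} \<subseteq> Pow Xw" using C_edges[OF w_nb uC] by blast
  have ii: "inj_on (image gg) {e\<in>Es T. u \<in> e \<and> e \<notin> {}}"
    by (rule inj_on_subset[OF inj_on_image_Pow[OF inj_gg] sub])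
  have "{\<epsilon>\<in>Es SS. gg u \<in> \<epsilon>} = (image gg) ` {e\<in>Es T. u \<in> e \<and> e \<notin> {}}"
    using edges_at_SS[OF uC, of "{}"] by simp
  then show ?thesis unfolding valency_def using card_image[OF ii] by simp
qed

lemma dt_SS: "decorated_tree SS"
proof -
  have dT: "finite (Vs T)" "finite (As T)" "Vs T \<inter> As T = {}"
    "\<And>\<alpha>. \<alpha> \<in> As T \<Longrightarrow> valency T \<alpha> = 1"
    "\<And>e \<alpha>. e \<in> Es T \<Longrightarrow> \<alpha> \<in> As T \<Longrightarrow> \<alpha> \<in> e \<Longrightarrow> qd T e \<alpha> = 1"
    "\<And>v e e'. v \<in> Vs T \<Longrightarrow> e \<in> Es T \<Longrightarrow> e' \<in> Es T \<Longrightarrow> v \<in> e \<Longrightarrow> v \<in> e' \<Longrightarrow> e \<noteq> e' \<Longrightarrow> gcd (qd T e v) (qd T e' v) = 1"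
    using dtS unfolding decorated_tree_def by auto
  have A1: "finite (Vs SS)" "finite (As SS)" using dT(1,2) Tp_Vs Tp_As by auto
  have A2: "Vs SS \<inter> As SS = {}" using dT(3) Tp_Vs Tp_As by auto
  have A3: "valency SS \<alpha> = 1" if "\<alpha> \<in> As SS" for \<alpha>
  proof (cases "\<alpha> = None")
    case True
    have "{e\<in>Es SS. None \<in> e} = {{None, Some w}}" using None_edges Tp_Es by auto
    then show ?thesis using True by (simp add: valency_def)
  next
    case False
    have "\<alpha> \<in> Some ` (As T \<inter> C w)" using that False Tp_As by auto
    then obtain a where a: "\<alpha> = Some a" "a \<in> As T" "a \<in> C w" by blast
    then show ?thesis using valency_SS[OF a(3)] gg_C[OF a(3)] dT(4) by simp
  qed
  have A4: "qd SS e \<alpha> = 1" if "e \<in> Es SS" "\<alpha> \<in> As SS" "\<alpha> \<in> e" for e \<alpha>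
  proof (cases "\<alpha> = None")
    case True
    then show ?thesis using None_edges that Tp_qd by simp
  next
    case False
    have "\<alpha> \<in> Some ` (As T \<inter> C w)" using that False Tp_As by auto
    then obtain a where a: "\<alpha> = Some a" "a \<in> As T" "a \<in> C w" by blast
    have "e \<in> (image gg) ` Ew" using that(1) Es_SS by simp
    then obtain e0 where e0: "e = gg ` e0" "e0 \<in> Ew" by blast
    have aX: "a \<in> Xw" using a by simp
    have "gg a \<in> gg ` e0" using that(3) e0 a gg_C by simp
    then have ae: "a \<in> e0" using inj_on_image_mem_iff[OF inj_gg aX] e0 by (auto simp: Ew_def)
    have "qd SS e \<alpha> = qd T e0 a" using qd_SS[OF e0(2) ae] e0 a gg_C by simp
    then show ?thesis using dT(5)[of e0 a] e0 a ae by (simp add: Ew_def)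
  qed
  have A5: "gcd (qd SS e v) (qd SS e' v) = 1"
    if "v \<in> Vs SS" "e \<in> Es SS" "e' \<in> Es SS" "v \<in> e" "v \<in> e'" "e \<noteq> e'" for v e e'
  proof -
    have "v \<in> Some ` (Vs T \<inter> C w)" using that Tp_Vs by auto
    then obtain a where a: "v = Some a" "a \<in> Vs T" "a \<in> C w" by blast
    have gv: "gg a = v" using a gg_C by simp
    have aX: "a \<in> Xw" using a by simp
    have "e \<in> (image gg) ` Ew" using that(2) Es_SS by simp
    then obtain e0 where e0: "e = gg ` e0" "e0 \<in> Ew" by blast
    have "e' \<in> (image gg) ` Ew" using that(3) Es_SS by simp
    then obtain e1 where e1: "e' = gg ` e1" "e1 \<in> Ew" by blast
    have a0: "a \<in> e0" using inj_on_image_mem_iff[OF inj_gg aX] e0 that(4) gv by (auto simp: Ew_def)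
    have a1: "a \<in> e1" using inj_on_image_mem_iff[OF inj_gg aX] e1 that(5) gv by (auto simp: Ew_def)
    have "e0 \<noteq> e1" using that(6) e0 e1 by auto
    then have "gcd (qd T e0 a) (qd T e1 a) = 1" using dT(6)[OF a(2)] e0 e1 a0 a1 by (auto simp: Ew_def)
    then show ?thesis using qd_SS[OF e0(2) a0] qd_SS[OF e1(2) a1] e0 e1 gv by simp
  qed
  show ?thesis unfolding decorated_tree_def using A1 A2 A3 A4 A5 tree_SS by auto
qed

end

context branch
begin

lemma SS_dt: "dt SS" by (rule dt.intro[OF dt_SS])

lemma Pr_SS: "x \<in> Xw \<Longrightarrow> y \<in> Xw \<Longrightarrow> Pr SS (gam SS (gg x) (gg y)) = Pr T (gam T x y)"
proof -
  assume x: "x \<in> Xw" and y: "y \<in> Xw"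
  interpret S: dt SS by (rule SS_dt)
  let ?p = "gam T x y"
  have xc: "x \<in> cells T" "y \<in> cells T" using x y Xw_cells by auto
  have pT: "is_path (cells T) (Es T) ?p" using gp_path[OF xc] gam_gp by simp
  have sp: "set ?p \<subseteq> Xw" using X_conv[OF w_nb x y] gam_gp by simp
  have gS: "gam SS (gg x) (gg y) = map gg ?p" using gam_SS[OF x y] .
  have gc: "gg x \<in> cells SS" "gg y \<in> cells SS" using x y cells_SS by auto
  have pS: "is_path (cells SS) (Es SS) (map gg ?p)" using S.gp_path[OF gc] S.gam_gp gS by simp
  have PEs: "set (path_edges (map gg ?p)) = (image gg) ` set (path_edges ?p)"
    by (simp add: path_edges_map)
  have PEx: "set (path_edges ?p) \<subseteq> Pow Xw" using path_edges_subset sp by blast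
  have ij: "inj_on gg (set ?p)" using inj_on_subset[OF inj_gg sp] .
  have "Pr SS (map gg ?p) = (\<Prod>u\<in>set (map gg ?p). Wt SS (qd SS) (set (path_edges (map gg ?p))) u)"
    by (rule S.Pr_cells[OF pS])
  also have "\<dots> = (\<Prod>u\<in>gg ` set ?p. Wt SS (qd SS) ((image gg) ` set (path_edges ?p)) u)"
    unfolding PEs by simp
  also have "\<dots> = (\<Prod>u\<in>set ?p. Wt SS (qd SS) ((image gg) ` set (path_edges ?p)) (gg u))"
    using prod.reindex[OF ij, of "\<lambda>u. Wt SS (qd SS) ((image gg) ` set (path_edges ?p)) u"] by (simp add: comp_def)
  also have "\<dots> = (\<Prod>u\<in>set ?p. Wt T (qd T) (set (path_edges ?p)) u)"
  proof (rule prod.cong[OF refl])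
    fix u assume "u \<in> set ?p"
    then have "u \<in> Xw" using sp by blast
    then show "Wt SS (qd SS) ((image gg) ` set (path_edges ?p)) (gg u) = Wt T (qd T) (set (path_edges ?p)) u"
      by (rule Wt_SS[OF _ PEx])
  qed
  also have "\<dots> = Pr T ?p" by (rule Pr_cells[OF pT, symmetric])
  finally show ?thesis using gS by simp
qed

lemma central_SS: "central SS None"
proof -
  have Nc: "None \<in> cells SS" using cells_SS gg_v0 by auto
  have NA: "None \<in> As SS" using Tp_As by simp
  have cen: "\<forall>y'\<in>Vs SS. (\<forall>e\<in>Es SS. y' \<in> e \<and> e \<notin> set (path_edges (gam SS None y')) \<longrightarrow> qd SS e y' \<ge> 1) \<and>
         card {e\<in>Es SS. y' \<in> e \<and> e \<notin> set (path_edges (gam SS None y')) \<and> qd SS e y' \<noteq> 1} \<le> 1"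
  proof
    fix y' assume "y' \<in> Vs SS"
    then have "y' \<in> Some ` (Vs T \<inter> C w)" using Tp_Vs by simp
    then obtain y where y: "y' = Some y" "y \<in> Vs T" "y \<in> C w" by blast
    have gy: "gg y = y'" using y gg_C by simp
    have yc: "y \<in> cells T" "y \<noteq> v0" using C_facts[OF w_nb y(3)] by auto
    have v0X: "v0 \<in> Xw" by simp
    have yX: "y \<in> Xw" using y by simp
    let ?F = "set (path_edges (gam T v0 y))"
    have gS: "gam SS None y' = map gg (gam T v0 y)" using gam_SS[OF v0X yX] gg_v0 gy by simp
    have FS: "set (path_edges (gam SS None y')) = (image gg) ` ?F" using gS by (simp add: path_edges_map)
    have Fsub: "?F \<subseteq> Pow Xw" using path_edges_subset X_conv[OF w_nb v0X yX] gam_gp by fastforce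
    have ES: "{e\<in>Es SS. y' \<in> e \<and> e \<notin> (image gg) ` ?F} = (image gg) ` {e\<in>Es T. y \<in> e \<and> e \<notin> ?F}"
      using edges_at_SS[OF y(3) Fsub] gy by simp
    have rc: "(\<forall>e\<in>Es T. y \<in> e \<and> e \<notin> ?F \<longrightarrow> qd T e y \<ge> 1) \<and> card {e \<in> Es T. y \<in> e \<and> e \<notin> ?F \<and> qd T e y \<noteq> 1} \<le> 1"
      using rootc[OF y(2) yc(2)] .
    have qq: "qd SS (gg ` e) y' = qd T e y" if "e \<in> Es T" "y \<in> e" for e
    proof -
      have "e \<in> Ew" using C_edges[OF w_nb y(3) that] that by (simp add: Ew_def)
      then show ?thesis using qd_SS[OF _ that(2)] gy by simp
    qed
    have A: "\<forall>e\<in>Es SS. y' \<in> e \<and> e \<notin> set (path_edges (gam SS None y')) \<longrightarrow> qd SS e y' \<ge> 1"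
    proof (intro ballI impI)
      fix e assume e: "e \<in> Es SS" "y' \<in> e \<and> e \<notin> set (path_edges (gam SS None y'))"
      then have "e \<in> (image gg) ` {e\<in>Es T. y \<in> e \<and> e \<notin> ?F}" using ES FS by blast
      then obtain e0 where e0: "e = gg ` e0" "e0 \<in> Es T" "y \<in> e0" "e0 \<notin> ?F" by blast
      then show "qd SS e y' \<ge> 1" using qq rc by simp
    qed
    have sub: "{e\<in>Es SS. y' \<in> e \<and> e \<notin> set (path_edges (gam SS None y')) \<and> qd SS e y' \<noteq> 1}
        \<subseteq> (image gg) ` {e \<in> Es T. y \<in> e \<and> e \<notin> ?F \<and> qd T e y \<noteq> 1}"
    proof
      fix e assume e: "e \<in> {e\<in>Es SS. y' \<in> e \<and> e \<notin> set (path_edges (gam SS None y')) \<and> qd SS e y' \<noteq> 1}"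
      then have "e \<in> (image gg) ` {e\<in>Es T. y \<in> e \<and> e \<notin> ?F}" using ES FS by blast
      then obtain e0 where e0: "e = gg ` e0" "e0 \<in> Es T" "y \<in> e0" "e0 \<notin> ?F" by blast
      then show "e \<in> (image gg) ` {e \<in> Es T. y \<in> e \<and> e \<notin> ?F \<and> qd T e y \<noteq> 1}" using qq e by auto
    qed
    have "card {e\<in>Es SS. y' \<in> e \<and> e \<notin> set (path_edges (gam SS None y')) \<and> qd SS e y' \<noteq> 1}
        \<le> card ((image gg) ` {e \<in> Es T. y \<in> e \<and> e \<notin> ?F \<and> qd T e y \<noteq> 1})"
      by (rule card_mono[OF _ sub]) (use finX1 in simp)
    also have "\<dots> \<le> card {e \<in> Es T. y \<in> e \<and> e \<notin> ?F \<and> qd T e y \<noteq> 1}" by (rule card_image_le) (use finX1 in simp)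
    also have "\<dots> \<le> 1" using rc by blast
    finally show "(\<forall>e\<in>Es SS. y' \<in> e \<and> e \<notin> set (path_edges (gam SS None y')) \<longrightarrow> qd SS e y' \<ge> 1) \<and>
         card {e\<in>Es SS. y' \<in> e \<and> e \<notin> set (path_edges (gam SS None y')) \<and> qd SS e y' \<noteq> 1} \<le> 1"
      using A by blast
  qed
  show ?thesis
    by (rule central.intro[OF rooted.intro[OF SS_dt rooted_axioms.intro[OF Nc]] central_axioms.intro[OF NA cen]])
qed

lemma fd_gg: "u \<in> C w \<Longrightarrow> fd SS (gg u) = fd T u" using gg_C Tp_fd by simp
lemma fdNone: "fd SS None = 0" using Tp_fd by simp
lemma fd01_SS: "\<forall>\<alpha>\<in>As SS. fd SS \<alpha> \<in> {0,1}" using f01 Tp_As Tp_fd by auto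

lemma A0_SS: "A0 SS = insert None (Some ` (A0 T \<inter> C w))"
  unfolding A0_def Tp_As using Tp_fd by auto

lemma L_SS: "As SS - A0 SS = gg ` ((As T - A0 T) \<inter> C w)"
proof -
  have "As SS - A0 SS = Some ` ((As T - A0 T) \<inter> C w)" unfolding A0_SS Tp_As by (auto simp: A0_def)
  then show ?thesis using gg_C_img[of "(As T - A0 T) \<inter> C w"] by auto
qed

lemma Y_SS: "(Vs SS \<union> A0 SS) - {None} = gg ` ((Vs T \<union> A0 T) \<inter> C w)"
proof -
  have "(Vs SS \<union> A0 SS) - {None} = Some ` ((Vs T \<union> A0 T) \<inter> C w)" unfolding A0_SS Tp_Vs by auto
  then show ?thesis using gg_C_img[of "(Vs T \<union> A0 T) \<inter> C w"] by auto
qed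

end

context mainT
begin

lemma fL: "\<alpha> \<in> As T - A0 T \<Longrightarrow> fd T \<alpha> = 1" using f01 by (auto simp: A0_def)

lemma NT: "Nf T v = (\<Sum>\<alpha>\<in>As T - A0 T. Pr T (gam T v \<alpha>))"
  unfolding Nf_def by (rule sum.cong) (auto simp: xval_Pr fL)

lemma L_cells: "As T - A0 T \<subseteq> cells T - {v0}" using v0V dtS by (auto simp: cells_def decorated_tree_def)

end

context branch
begin

lemma branch_M:
  defines "dW \<equiv> (\<Sum>\<alpha>\<in>(As T - A0 T) \<inter> C w. PT \<alpha>)" and "d \<equiv> (\<Sum>\<alpha>\<in>As T - A0 T. PT \<alpha>)"
    and "XW \<equiv> (\<Sum>v\<in>(Vs T \<union> A0 T) \<inter> C w. Nf T v * (int (valency T v) - 2))"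
  shows "Mf (Ti T v0 w) = 2 * dW - dW^2 + XW - (d - dW) * (dW - 1)"
    and "Ff (Ti T v0 w) = int (card ((As T - A0 T) \<inter> C w))"
proof -
  interpret S: central SS None by (rule central_SS)
  note MS = S.M_star[OF fd01_SS fdNone]
  have Ti: "Ti T v0 w = star SS None" by (simp add: Ti_def)
  let ?L = "As T - A0 T"
  let ?LC = "?L \<inter> C w" and ?YC = "(Vs T \<union> A0 T) \<inter> C w"
  have finL: "finite ?L" using dtS by (simp add: decorated_tree_def)
  have ijL: "inj_on gg ?LC" by (rule inj_on_subset[OF inj_gg]) auto
  have ijY: "inj_on gg ?YC" by (rule inj_on_subset[OF inj_gg]) auto
  have v0X: "v0 \<in> Xw" by simp
  have PS: "S.P (gg y) = PT y" if y: "y \<in> C w" for y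
  proof -
    have yX: "y \<in> Xw" using y by simp
    have "S.P (gg y) = Pr SS (gam SS (gg v0) (gg y))" unfolding S.P_def using S.gam_gp gg_v0 by simp
    also have "\<dots> = Pr T (gam T v0 y)" by (rule Pr_SS[OF v0X yX])
    finally show ?thesis unfolding PT_def using gam_gp by simp
  qed
  have sdS: "(\<Sum>\<alpha>\<in>As SS - A0 SS. S.P \<alpha>) = dW"
    unfolding L_SS dW_def using sum.reindex[OF ijL, of S.P] PS by (simp add: comp_def)
  have NSS: "Nf SS (gg v) = (\<Sum>\<alpha>\<in>?LC. Pr T (gam T v \<alpha>))" if v: "v \<in> C w" for v
  proof -
    have vX: "v \<in> Xw" using v by simp
    have "Nf SS (gg v) = (\<Sum>\<alpha>\<in>gg ` ?LC. xval SS (gg v) \<alpha>)" unfolding Nf_def L_SS ..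
    also have "\<dots> = (\<Sum>\<alpha>\<in>?LC. xval SS (gg v) (gg \<alpha>))"
      using sum.reindex[OF ijL, of "xval SS (gg v)"] by (simp add: comp_def)
    also have "\<dots> = (\<Sum>\<alpha>\<in>?LC. Pr T (gam T v \<alpha>))"
    proof (rule sum.cong[OF refl])
      fix \<alpha> assume a: "\<alpha> \<in> ?LC"
      then have aX: "\<alpha> \<in> Xw" by simp
      have "xval SS (gg v) (gg \<alpha>) = fd SS (gg \<alpha>) * Pr SS (gam SS (gg v) (gg \<alpha>))" by (rule xval_Pr)
      also have "\<dots> = Pr T (gam T v \<alpha>)" using fd_gg fL Pr_SS[OF vX aX] a by simp
      finally show "xval SS (gg v) (gg \<alpha>) = Pr T (gam T v \<alpha>)" .
    qed
    finally show ?thesis .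
  qed
  have dsplit: "d = dW + (\<Sum>\<alpha>\<in>?L - C w. PT \<alpha>)" unfolding d_def dW_def by (rule sum.Int_Diff[OF finL])
  have NTv: "Nf T v = Nf SS (gg v) + PT v * (d - dW)" if v: "v \<in> C w" for v
  proof -
    have "Nf T v = (\<Sum>\<alpha>\<in>?LC. Pr T (gam T v \<alpha>)) + (\<Sum>\<alpha>\<in>?L - C w. Pr T (gam T v \<alpha>))"
      unfolding NT by (rule sum.Int_Diff[OF finL])
    also have "(\<Sum>\<alpha>\<in>?L - C w. Pr T (gam T v \<alpha>)) = (\<Sum>\<alpha>\<in>?L - C w. PT v * PT \<alpha>)"
    proof (rule sum.cong[OF refl])
      fix \<alpha> assume a: "\<alpha> \<in> ?L - C w"
      then have ac: "\<alpha> \<in> cells T" "\<alpha> \<noteq> v0" using L_cells by auto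
      obtain w' where w': "w' \<in> nb" "\<alpha> \<in> C w'" using C_cover[OF ac] by blast
      have "w \<noteq> w'" using a w' by auto
      then show "Pr T (gam T v \<alpha>) = PT v * PT \<alpha>" using T6[OF w_nb w'(1) _ v w'(2)] by simp
    qed
    also have "\<dots> = PT v * (d - dW)" using dsplit by (simp add: sum_distrib_left)
    finally show ?thesis using NSS[OF v] by simp
  qed
  have sY: "(\<Sum>v'\<in>(Vs SS \<union> A0 SS) - {None}. Nf SS v' * (int (valency SS v') - 2))
      = (\<Sum>v\<in>?YC. Nf SS (gg v) * (int (valency T v) - 2))"
    unfolding Y_SS using sum.reindex[OF ijY, of "\<lambda>v'. Nf SS v' * (int (valency SS v') - 2)"] valency_SS
    by (simp add: comp_def)
  have sPY: "(\<Sum>v\<in>?YC. PT v * (int (valency T v) - 2)) = dW - 1"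
  proof -
    have "(\<Sum>v'\<in>(Vs SS \<union> A0 SS) - {None}. S.P v' * (int (valency SS v') - 2))
      = (\<Sum>v\<in>?YC. PT v * (int (valency T v) - 2))"
      unfolding Y_SS using sum.reindex[OF ijY, of "\<lambda>v'. S.P v' * (int (valency SS v') - 2)"] valency_SS PS
      by (simp add: comp_def)
    then show ?thesis using MS(3) sdS by simp
  qed
  have XWe: "XW = (\<Sum>v\<in>?YC. Nf SS (gg v) * (int (valency T v) - 2)) + (d - dW) * (dW - 1)"
  proof -
    have "XW = (\<Sum>v\<in>?YC. Nf SS (gg v) * (int (valency T v) - 2) + (d - dW) * (PT v * (int (valency T v) - 2)))"
      unfolding XW_def by (rule sum.cong[OF refl]) (simp add: NTv algebra_simps)
    also have "\<dots> = (\<Sum>v\<in>?YC. Nf SS (gg v) * (int (valency T v) - 2)) + (d - dW) * (\<Sum>v\<in>?YC. PT v * (int (valency T v) - 2))"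
      by (simp add: sum.distrib sum_distrib_left)
    finally show ?thesis using sPY by simp
  qed
  show "Mf (Ti T v0 w) = 2 * dW - dW^2 + XW - (d - dW) * (dW - 1)"
    using MS(1) Ti sdS sY XWe by simp
  have "card (As SS - A0 SS) = card ?LC" unfolding L_SS by (rule card_image[OF ijL])
  then show "Ff (Ti T v0 w) = int (card ?LC)" using MS(2) Ti by simp
qed

end

context mainT
begin

lemma part_sum:
  assumes A: "A \<subseteq> cells T - {v0}"
  shows "(\<Sum>x\<in>A. f x) = (\<Sum>w\<in>nb. \<Sum>x\<in>A \<inter> C w. f x)"
proof -
  have finA: "finite A" using A finX0 finite_subset by blast
  have eq: "A = (\<Union>w\<in>nb. A \<inter> C w)" using C_cover A by blast
  have disj: "\<forall>w\<in>nb. \<forall>w'\<in>nb. w \<noteq> w' \<longrightarrow> (A \<inter> C w) \<inter> (A \<inter> C w') = {}" using C_disj by blast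
  have "(\<Sum>x\<in>(\<Union>w\<in>nb. A \<inter> C w). f x) = (\<Sum>w\<in>nb. \<Sum>x\<in>A \<inter> C w. f x)"
    by (rule sum.UNION_disjoint) (use nb_card finA disj in auto)
  then show ?thesis using eq by simp
qed

lemma final:
  "genus T = (real_of_int (deg T v0) - 1) * (real_of_int (deg T v0) - 2) / 2
      - (\<Sum>w\<in>nb. delta (Ti T v0 w))"
proof -
  let ?L = "As T - A0 T" and ?Y = "Vs T \<union> A0 T"
  define d where "d = (\<Sum>\<alpha>\<in>?L. PT \<alpha>)"
  define dW where "dW w = (\<Sum>\<alpha>\<in>?L \<inter> C w. PT \<alpha>)" for w
  define XW where "XW w = (\<Sum>v\<in>?Y \<inter> C w. Nf T v * (int (valency T v) - 2))" for w
  define cw where "cw w = int (card (?L \<inter> C w))" for w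
  define n where "n = int (card nb)"
  have finnb: "finite nb" using nb_card by blast
  have nv: "int (valency T v0) = n" using nb_card n_def by simp
  have Lc: "?L \<subseteq> cells T - {v0}" by (rule L_cells)
  have Yc: "?Y - {v0} \<subseteq> cells T - {v0}" using dtS by (auto simp: cells_def A0_def decorated_tree_def)
  have finL: "finite ?L" and finY: "finite ?Y" using dtS by (auto simp: decorated_tree_def A0_def)
  have deg: "deg T v0 = d"
    unfolding deg_def NT d_def PT_def by (rule sum.cong) (auto simp: gam_gp)
  have dsum: "d = (\<Sum>w\<in>nb. dW w)" unfolding d_def dW_def by (rule part_sum[OF Lc])
  have Mi: "Mf (Ti T v0 w) = 2 * dW w - (dW w)^2 + XW w - (d - dW w) * (dW w - 1)"
    and Fi: "Ff (Ti T v0 w) = cw w" if w: "w \<in> nb" for w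
  proof -
    interpret B: branch T v0 w by (rule branch.intro[OF mainT_axioms]) (unfold_locales, rule w)
    show "Mf (Ti T v0 w) = 2 * dW w - (dW w)^2 + XW w - (d - dW w) * (dW w - 1)"
      using B.branch_M(1) unfolding dW_def XW_def d_def .
    show "Ff (Ti T v0 w) = cw w" using B.branch_M(2) unfolding cw_def .
  qed
  have FT: "Ff T = (\<Sum>w\<in>nb. cw w)"
  proof -
    have "Ff T = (\<Sum>\<alpha>\<in>?L. 1)" unfolding Ff_def F_arrow_def by (rule sum.cong) (auto simp: fL)
    also have "\<dots> = (\<Sum>w\<in>nb. \<Sum>x\<in>?L \<inter> C w. 1)" by (rule part_sum[OF Lc])
    finally show ?thesis unfolding cw_def by simp
  qed
  have MT: "Mf T = - (d * (n - 2) + (\<Sum>w\<in>nb. XW w))"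
  proof -
    have v0Y: "v0 \<in> ?Y" using v0V by simp
    have "(\<Sum>v\<in>?Y. Nf T v * (int (valency T v) - 2)) = Nf T v0 * (int (valency T v0) - 2) + (\<Sum>v\<in>?Y - {v0}. Nf T v * (int (valency T v) - 2))"
      by (rule sum.remove[OF finY v0Y])
    also have "(\<Sum>v\<in>?Y - {v0}. Nf T v * (int (valency T v) - 2)) = (\<Sum>w\<in>nb. \<Sum>v\<in>(?Y - {v0}) \<inter> C w. Nf T v * (int (valency T v) - 2))"
      by (rule part_sum[OF Yc])
    also have "\<dots> = (\<Sum>w\<in>nb. XW w)"
      unfolding XW_def by (rule sum.cong[OF refl]) (use v0_notC in \<open>auto intro!: sum.cong\<close>)
    moreover have "Nf T v0 = d" using deg by (simp add: deg_def)
    ultimately show ?thesis unfolding Mf_def using nv by simp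
  qed
  have key: "2 - Mf T - Ff T = (d - 1) * (d - 2) - (\<Sum>w\<in>nb. Ff (Ti T v0 w) - Mf (Ti T v0 w))"
  proof -
    have "(\<Sum>w\<in>nb. Ff (Ti T v0 w) - Mf (Ti T v0 w)) = (\<Sum>w\<in>nb. cw w - (dW w + XW w - d * dW w + d))"
      by (rule sum.cong[OF refl]) (simp add: Mi Fi power2_eq_square algebra_simps)
    also have "\<dots> = (\<Sum>w\<in>nb. cw w) - ((\<Sum>w\<in>nb. dW w) + (\<Sum>w\<in>nb. XW w) - d * (\<Sum>w\<in>nb. dW w) + n * d)"
      by (simp add: sum_subtractf sum.distrib sum_distrib_left n_def)
    finally have "(\<Sum>w\<in>nb. Ff (Ti T v0 w) - Mf (Ti T v0 w)) = Ff T - (d + (\<Sum>w\<in>nb. XW w) - d * d + n * d)"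
      using FT dsum by simp
    then show ?thesis using MT by (simp add: algebra_simps)
  qed
  have "genus T = real_of_int (2 - Mf T - Ff T) / 2" unfolding genus_def by simp
  also have "\<dots> = real_of_int ((d - 1) * (d - 2)) / 2 - real_of_int (\<Sum>w\<in>nb. Ff (Ti T v0 w) - Mf (Ti T v0 w)) / 2"
    unfolding key by (simp add: diff_divide_distrib)
  also have "real_of_int (\<Sum>w\<in>nb. Ff (Ti T v0 w) - Mf (Ti T v0 w)) / 2 = (\<Sum>w\<in>nb. delta (Ti T v0 w))"
    unfolding delta_def by (simp add: sum_divide_distrib)
  finally show ?thesis using deg by simp
qed

end

theorem theorem6p8:
  fixes T :: "'a dtree" and v0 :: 'a
  assumes "decorated_tree T"
    and "is_root T v0"
    and "\<forall>\<alpha>\<in>As T. fd T \<alpha> \<in> {0, 1}"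
    and "valency T v0 \<ge> 1"
  shows "genus T = (real_of_int (deg T v0) - 1) * (real_of_int (deg T v0) - 2) / 2
                   - (\<Sum>w\<in>nbrs T v0. delta (Ti T v0 w))"
proof -
  have v0c: "v0 \<in> cells T" using assms(2) by (simp add: is_root_def cells_def)
  interpret M: mainT T v0
    by (rule mainT.intro[OF rooted.intro[OF dt.intro[OF assms(1)] rooted_axioms.intro[OF v0c]]])
       (rule mainT_axioms.intro[OF assms(2,3)])
  show ?thesis by (rule M.final)
qed

end
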